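(* Let $\tilde{\mathfrak g}$ be a real solvable Lie algebra with an Einstein metric $\langle,\rangle$ (i.e. $\widetilde{\operatorname{Ric}}=\lambda\,\mathrm{id}$ for some $\lambda\in\mathbb R$) and a standard decomposition $\tilde{\mathfrak g}=\mathfrak g\oplus^\perp\mathfrak a$, and assume that $\operatorname{ad}X$ is normal (i.e. commutes with its $\langle,\rangle$-adjoint) for every $X\in\mathfrak a$. Let $H\in\tilde{\mathfrak g}$ be defined by $\langle H,v\rangle=\operatorname{Tr}(\operatorname{ad}v)$ for all $v\in\tilde{\mathfrak g}$. If $\mathfrak b$ is a subspace of $\mathfrak a$ containing $H$ on which the restriction of the metric is nondegenerate, then the subalgebra $\mathfrak g\oplus^\perp\mathfrak b$ with the restricted metric is also Einstein.
   Context: A metric on a Lie algebra is a nondegenerate symmetric bilinear form, possibly indefinite; Ricci operators are those of the corresponding left-invariant pseudo-Riemannian metrics on simply connected Lie groups. A standard decomposition of a metric Lie algebra $\tilde{\mathfrak g}$ is a decomposition $\tilde{\mathfrak g}=\mathfrak g\oplus^\perp\mathfrak a$ as an orthogonal direct sum of vector spaces, where $\mathfrak g$ is a nilpotent ideal and $\mathfrak a$ is an abelian subalgebra. *)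

theory Defs
  imports "HOL-Analysis.Analysis"
begin

text \<open>Lie algebras are modelled as subspaces G of a finite-dimensional real vector space
  'v (of class euclidean_space; its inner product is never used), with a bracket br on 'v
  whose Lie algebra axioms are required on G only. A metric is a function g on 'v which is
  symmetric, bilinear and nondegenerate on G (possibly indefinite).\<close>

definition lie_algebra :: "'v::euclidean_space set \<Rightarrow> ('v \<Rightarrow> 'v \<Rightarrow> 'v) \<Rightarrow> bool" where
  "lie_algebra G br \<longleftrightarrow> subspace G \<and>
     (\<forall>x\<in>G. \<forall>y\<in>G. br x y \<in> G) \<and>
     (\<forall>x\<in>G. \<forall>y\<in>G. \<forall>z\<in>G. br (x + y) z = br x z + br y z \<and> br z (x + y) = br z x + br z y) \<and>
     (\<forall>x\<in>G. \<forall>y\<in>G. \<forall>a::real. br (a *\<^sub>R x) y = a *\<^sub>R br x y \<and> br y (a *\<^sub>R x) = a *\<^sub>R br y x) \<and>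
     (\<forall>x\<in>G. br x x = 0) \<and>
     (\<forall>x\<in>G. \<forall>y\<in>G. \<forall>z\<in>G. br x (br y z) + br y (br z x) + br z (br x y) = 0)"

definition subalgebra :: "'v::euclidean_space set \<Rightarrow> 'v set \<Rightarrow> ('v \<Rightarrow> 'v \<Rightarrow> 'v) \<Rightarrow> bool" where
  "subalgebra S G br \<longleftrightarrow> subspace S \<and> S \<subseteq> G \<and> (\<forall>x\<in>S. \<forall>y\<in>S. br x y \<in> S)"

definition lie_ideal :: "'v::euclidean_space set \<Rightarrow> 'v set \<Rightarrow> ('v \<Rightarrow> 'v \<Rightarrow> 'v) \<Rightarrow> bool" where
  "lie_ideal N G br \<longleftrightarrow> subspace N \<and> N \<subseteq> G \<and> (\<forall>x\<in>G. \<forall>y\<in>N. br x y \<in> N)"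

definition abelian_subalgebra :: "'v::euclidean_space set \<Rightarrow> 'v set \<Rightarrow> ('v \<Rightarrow> 'v \<Rightarrow> 'v) \<Rightarrow> bool" where
  "abelian_subalgebra A G br \<longleftrightarrow> subspace A \<and> A \<subseteq> G \<and> (\<forall>x\<in>A. \<forall>y\<in>A. br x y = 0)"

fun derived_series :: "'v::euclidean_space set \<Rightarrow> ('v \<Rightarrow> 'v \<Rightarrow> 'v) \<Rightarrow> nat \<Rightarrow> 'v set" where
  "derived_series G br 0 = G"
| "derived_series G br (Suc k) =
     span {br x y | x y. x \<in> derived_series G br k \<and> y \<in> derived_series G br k}"

fun lower_central_series :: "'v::euclidean_space set \<Rightarrow> ('v \<Rightarrow> 'v \<Rightarrow> 'v) \<Rightarrow> nat \<Rightarrow> 'v set" where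
  "lower_central_series G br 0 = G"
| "lower_central_series G br (Suc k) =
     span {br x y | x y. x \<in> G \<and> y \<in> lower_central_series G br k}"

definition solvable_lie :: "'v::euclidean_space set \<Rightarrow> ('v \<Rightarrow> 'v \<Rightarrow> 'v) \<Rightarrow> bool" where
  "solvable_lie G br \<longleftrightarrow> lie_algebra G br \<and> (\<exists>k. derived_series G br k = {0})"

definition nilpotent_lie :: "'v::euclidean_space set \<Rightarrow> ('v \<Rightarrow> 'v \<Rightarrow> 'v) \<Rightarrow> bool" where
  "nilpotent_lie G br \<longleftrightarrow> lie_algebra G br \<and> (\<exists>k. lower_central_series G br k = {0})"

definition metric_on :: "'v::euclidean_space set \<Rightarrow> ('v \<Rightarrow> 'v \<Rightarrow> real) \<Rightarrow> bool" where
  "metric_on G g \<longleftrightarrow>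
     (\<forall>x\<in>G. \<forall>y\<in>G. g x y = g y x) \<and>
     (\<forall>x\<in>G. \<forall>y\<in>G. \<forall>z\<in>G. g (x + y) z = g x z + g y z) \<and>
     (\<forall>x\<in>G. \<forall>y\<in>G. \<forall>a::real. g (a *\<^sub>R x) y = a * g x y) \<and>
     (\<forall>x\<in>G. (\<forall>y\<in>G. g x y = 0) \<longrightarrow> x = 0)"

definition metric_lie_algebra :: "'v::euclidean_space set \<Rightarrow> ('v \<Rightarrow> 'v \<Rightarrow> 'v) \<Rightarrow> ('v \<Rightarrow> 'v \<Rightarrow> real) \<Rightarrow> bool" where
  "metric_lie_algebra G br g \<longleftrightarrow> lie_algebra G br \<and> metric_on G g"

definition ltrace :: "'v::euclidean_space set \<Rightarrow> ('v \<Rightarrow> 'v) \<Rightarrow> real" where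
  "ltrace L f = (let B = (SOME B. B \<subseteq> L \<and> independent B \<and> span B = L)
                 in \<Sum>b\<in>B. representation B (f b) b)"

definition ad :: "('v \<Rightarrow> 'v \<Rightarrow> 'v) \<Rightarrow> 'v \<Rightarrow> 'v \<Rightarrow> 'v" where
  "ad br x = (\<lambda>y. br x y)"

definition metric_adjoint :: "'v::euclidean_space set \<Rightarrow> ('v \<Rightarrow> 'v \<Rightarrow> real) \<Rightarrow> ('v \<Rightarrow> 'v) \<Rightarrow> 'v \<Rightarrow> 'v" where
  "metric_adjoint L g f y = (THE z. z \<in> L \<and> (\<forall>w\<in>L. g z w = g y (f w)))"

definition normal_op :: "'v::euclidean_space set \<Rightarrow> ('v \<Rightarrow> 'v \<Rightarrow> real) \<Rightarrow> ('v \<Rightarrow> 'v) \<Rightarrow> bool" where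
  "normal_op L g f \<longleftrightarrow>
     (\<forall>y\<in>L. f (metric_adjoint L g f y) = metric_adjoint L g f (f y))"

text \<open>Levi-Civita connection of the left-invariant metric (Koszul formula):
  2 g(nabla_X Y, Z) = g([X,Y],Z) - g([Y,Z],X) + g([Z,X],Y).\<close>
definition levi_civita :: "'v::euclidean_space set \<Rightarrow> ('v \<Rightarrow> 'v \<Rightarrow> 'v) \<Rightarrow> ('v \<Rightarrow> 'v \<Rightarrow> real) \<Rightarrow> 'v \<Rightarrow> 'v \<Rightarrow> 'v" where
  "levi_civita L br g X Y = (THE Z. Z \<in> L \<and>
     (\<forall>W\<in>L. 2 * g Z W = g (br X Y) W - g (br Y W) X + g (br W X) Y))"

definition curvature :: "'v::euclidean_space set \<Rightarrow> ('v \<Rightarrow> 'v \<Rightarrow> 'v) \<Rightarrow> ('v \<Rightarrow> 'v \<Rightarrow> real) \<Rightarrow> 'v \<Rightarrow> 'v \<Rightarrow> 'v \<Rightarrow> 'v" where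
  "curvature L br g X Y Z =
     levi_civita L br g X (levi_civita L br g Y Z)
     - levi_civita L br g Y (levi_civita L br g X Z)
     - levi_civita L br g (br X Y) Z"

definition ricci_tensor :: "'v::euclidean_space set \<Rightarrow> ('v \<Rightarrow> 'v \<Rightarrow> 'v) \<Rightarrow> ('v \<Rightarrow> 'v \<Rightarrow> real) \<Rightarrow> 'v \<Rightarrow> 'v \<Rightarrow> real" where
  "ricci_tensor L br g Y Z = ltrace L (\<lambda>X. curvature L br g X Y Z)"

definition ricci_op :: "'v::euclidean_space set \<Rightarrow> ('v \<Rightarrow> 'v \<Rightarrow> 'v) \<Rightarrow> ('v \<Rightarrow> 'v \<Rightarrow> real) \<Rightarrow> 'v \<Rightarrow> 'v" where
  "ricci_op L br g Y = (THE R. R \<in> L \<and> (\<forall>Z\<in>L. g R Z = ricci_tensor L br g Y Z))"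

definition einstein :: "'v::euclidean_space set \<Rightarrow> ('v \<Rightarrow> 'v \<Rightarrow> 'v) \<Rightarrow> ('v \<Rightarrow> 'v \<Rightarrow> real) \<Rightarrow> bool" where
  "einstein L br g \<longleftrightarrow> metric_lie_algebra L br g \<and>
     (\<exists>c::real. \<forall>Y\<in>L. ricci_op L br g Y = c *\<^sub>R Y)"

definition standard_decomposition ::
  "'v::euclidean_space set \<Rightarrow> ('v \<Rightarrow> 'v \<Rightarrow> 'v) \<Rightarrow> ('v \<Rightarrow> 'v \<Rightarrow> real) \<Rightarrow> 'v set \<Rightarrow> 'v set \<Rightarrow> bool" where
  "standard_decomposition G br g N A \<longleftrightarrow>
     lie_ideal N G br \<and> nilpotent_lie N br \<and> abelian_subalgebra A G br \<and>
     N \<inter> A = {0} \<and> G = {n + a | n a. n \<in> N \<and> a \<in> A} \<and>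
     (\<forall>n\<in>N. \<forall>a\<in>A. g n a = 0)"

end

theory Submission imports Defs begin

lemma coeff_unique:
  fixes B :: "'v::real_vector set"
  assumes "finite B" "independent B" "(\<Sum>b\<in>B. c b *\<^sub>R b) = (\<Sum>b\<in>B. c' b *\<^sub>R b)" "b \<in> B"
  shows "c b = c' b"
proof (rule ccontr)
  assume ne: "c b \<noteq> c' b"
  have "(\<Sum>b\<in>B. (c b - c' b) *\<^sub>R b) = 0"
    using assms(3) by (simp add: scaleR_diff_left sum_subtractf)
  then have "dependent B" using ne assms(1,4) by (subst dependent_finite) (auto intro!: exI[of _ "\<lambda>b. c b - c' b"])
  then show False using assms(2) by simp
qed

lemma linsum:
  fixes f :: "'v::real_vector \<Rightarrow> 'b::real_vector"
  assumes add: "\<And>x y. x \<in> U \<Longrightarrow> y \<in> U \<Longrightarrow> f (x + y) = f x + f y"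
    and sc: "\<And>x a. x \<in> U \<Longrightarrow> f (a *\<^sub>R x) = a *\<^sub>R f x"
    and sub: "subspace U"
    and "finite I" "\<And>i. i \<in> I \<Longrightarrow> v i \<in> U"
  shows "f (\<Sum>i\<in>I. c i *\<^sub>R v i) = (\<Sum>i\<in>I. c i *\<^sub>R f (v i))"
  using assms(4,5)
proof (induction I rule: finite_induct)
  case empty
  have "f 0 = 0" using sc[of 0 0] sub by (simp add: subspace_0)
  then show ?case by simp
next
  case (insert x F)
  have s: "(\<Sum>i\<in>F. c i *\<^sub>R v i) \<in> U" using insert.prems sub
    by (intro subspace_sum) (auto simp: subspace_scale)
  have vx: "c x *\<^sub>R v x \<in> U" using insert.prems sub by (auto simp: subspace_scale)
  have "f (\<Sum>i\<in>insert x F. c i *\<^sub>R v i) = f (c x *\<^sub>R v x + (\<Sum>i\<in>F. c i *\<^sub>R v i))"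
    using insert.hyps by simp
  also have "\<dots> = f (c x *\<^sub>R v x) + f (\<Sum>i\<in>F. c i *\<^sub>R v i)"
    using add[OF vx s] .
  also have "\<dots> = c x *\<^sub>R f (v x) + (\<Sum>i\<in>F. c i *\<^sub>R f (v i))"
    using insert.IH insert.prems sc[of "v x" "c x"] by simp
  finally show ?case using insert.hyps by (simp add: sum.insert)
qed

lemma arithP2:
  fixes R A B C X Y p q r s a b :: real
  assumes "R = A - B - C" "A = 0" "B = (X + Y) / 2" "X = (p - q) / 2" "Y = (r - s) / 2" "C = (- a + b) / 2"
  shows "R = - (p - q + r - s) / 4 + a / 2 - b / 2"
  using assms by (simp add: field_simps)
lemma arithD:
  fixes R A1 A2 A3 A4 A7 A8 B5 B6 B7 B8 p q r s s' t u p' :: real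
  assumes "R = - (B5 - B6 + B7 - B8) / 4 + A7 / 2 - A8 / 2"
    "A1 = - p" "A2 = q" "A3 = r" "A4 = - s" "A7 = - q" "A8 = p"
    "B5 = s'" "B6 = u" "B7 = t" "B8 = p'" "p' = p" "u + r = q + t" "s = s'"
  shows "R = ((A1 - A2) / 2 - (A3 - A4) / 2) / 2"
  using assms by (simp add: field_simps)

locale msp =
  fixes U :: "'v::euclidean_space set" and g :: "'v \<Rightarrow> 'v \<Rightarrow> real"
  assumes sub: "subspace U" and met: "metric_on U g"
begin

lemma gsym: "x \<in> U \<Longrightarrow> y \<in> U \<Longrightarrow> g x y = g y x"
  using met unfolding metric_on_def by blast
lemma gaddL: "x \<in> U \<Longrightarrow> y \<in> U \<Longrightarrow> z \<in> U \<Longrightarrow> g (x + y) z = g x z + g y z"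
  using met unfolding metric_on_def by blast
lemma gscL: "x \<in> U \<Longrightarrow> y \<in> U \<Longrightarrow> g (a *\<^sub>R x) y = a * g x y"
  using met unfolding metric_on_def by blast
lemma nondeg: "x \<in> U \<Longrightarrow> (\<And>y. y \<in> U \<Longrightarrow> g x y = 0) \<Longrightarrow> x = 0"
  using met unfolding metric_on_def by blast
lemma inU: "x \<in> U \<Longrightarrow> y \<in> U \<Longrightarrow> x + y \<in> U" "x \<in> U \<Longrightarrow> a *\<^sub>R x \<in> U" "0 \<in> U"
  "x \<in> U \<Longrightarrow> y \<in> U \<Longrightarrow> x - y \<in> U" "x \<in> U \<Longrightarrow> - x \<in> U"
  using sub by (auto simp: subspace_add subspace_scale subspace_0 subspace_diff subspace_neg)
lemma inU_sum: "(\<And>i. i \<in> I \<Longrightarrow> f i \<in> U) \<Longrightarrow> sum f I \<in> U"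
  using sub by (rule subspace_sum)
lemma inU_sumsc: "(\<And>i. i \<in> I \<Longrightarrow> v i \<in> U) \<Longrightarrow> (\<Sum>i\<in>I. c i *\<^sub>R v i) \<in> U"
  by (rule inU_sum) (simp add: inU)
lemma gaddR: "x \<in> U \<Longrightarrow> y \<in> U \<Longrightarrow> z \<in> U \<Longrightarrow> g z (x + y) = g z x + g z y"
  using gsym[of z "x+y"] gsym[of z x] gsym[of z y] gaddL[of x y z] inU by simp
lemma gscR: "x \<in> U \<Longrightarrow> y \<in> U \<Longrightarrow> g y (a *\<^sub>R x) = a * g y x"
  using gsym[of y "a *\<^sub>R x"] gsym[of y x] gscL[of x y a] inU by simp
lemma g0L: "x \<in> U \<Longrightarrow> g 0 x = 0"
  using gscL[of 0 x 0] inU by simp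
lemma g0R: "x \<in> U \<Longrightarrow> g x 0 = 0"
  using g0L[of x] gsym[of x 0] inU by simp
lemma gminusL: "x \<in> U \<Longrightarrow> y \<in> U \<Longrightarrow> g (- x) y = - g x y"
  using gscL[of x y "-1"] by simp
lemma gminusR: "x \<in> U \<Longrightarrow> y \<in> U \<Longrightarrow> g y (- x) = - g y x"
  using gscR[of x y "-1"] by simp
lemma gdiffL: "x \<in> U \<Longrightarrow> y \<in> U \<Longrightarrow> z \<in> U \<Longrightarrow> g (x - y) z = g x z - g y z"
  using gaddL[of x "-y" z] gminusL[of y z] inU by simp
lemma gdiffR: "x \<in> U \<Longrightarrow> y \<in> U \<Longrightarrow> z \<in> U \<Longrightarrow> g z (x - y) = g z x - g z y"
  using gaddR[of x "-y" z] gminusR[of y z] inU by simp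
lemma gsumL: "finite I \<Longrightarrow> (\<And>i. i \<in> I \<Longrightarrow> f i \<in> U) \<Longrightarrow> y \<in> U \<Longrightarrow> g (sum f I) y = (\<Sum>i\<in>I. g (f i) y)"
proof (induction I rule: finite_induct)
  case empty then show ?case by (simp add: g0L)
next
  case (insert x F) then show ?case by (simp add: gaddL inU_sum)
qed
lemma gsumR: "finite I \<Longrightarrow> (\<And>i. i \<in> I \<Longrightarrow> f i \<in> U) \<Longrightarrow> y \<in> U \<Longrightarrow> g y (sum f I) = (\<Sum>i\<in>I. g y (f i))"
proof -
  assume a: "finite I" "\<And>i. i \<in> I \<Longrightarrow> f i \<in> U" "y \<in> U"
  have "g y (sum f I) = g (sum f I) y" using a inU_sum gsym by blast
  also have "\<dots> = (\<Sum>i\<in>I. g (f i) y)" using gsumL a by blast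
  also have "\<dots> = (\<Sum>i\<in>I. g y (f i))" using a gsym by (intro sum.cong) auto
  finally show ?thesis .
qed

definition dualb :: "'v set \<Rightarrow> ('v \<Rightarrow> 'v) \<Rightarrow> bool" where
  "dualb E d \<longleftrightarrow> finite E \<and> E \<subseteq> U \<and> span E = U \<and> (\<forall>e\<in>E. d e \<in> U) \<and>
     (\<forall>e\<in>E. \<forall>e'\<in>E. g e (d e') = (if e = e' then 1 else 0))"

lemma vanish:
  assumes "x \<in> U" "S \<subseteq> U" "U \<subseteq> span S" "\<And>s. s \<in> S \<Longrightarrow> g x s = 0"
  shows "x = 0"
proof (rule nondeg[OF assms(1)])
  fix u assume u: "u \<in> U"
  have sp: "subspace {u. u \<in> U \<and> g x u = 0}"
    unfolding subspace_def using assms(1) by (auto simp: inU g0R gaddR gscR)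
  have uS: "u \<in> span S" using u assms(3) by blast
  have "u \<in> U \<and> g x u = 0"
    using span_induct[where P="\<lambda>u. u \<in> U \<and> g x u = 0", OF uS sp] assms(2,4) by blast
  then show "g x u = 0" by simp
qed

lemma dualbD:
  assumes "dualb E d"
  shows "finite E" "E \<subseteq> U" "\<And>e. e \<in> E \<Longrightarrow> d e \<in> U"
    "\<And>e e'. e \<in> E \<Longrightarrow> e' \<in> E \<Longrightarrow> g e (d e') = (if e = e' then 1 else 0)"
  using assms unfolding dualb_def by auto

lemma dualb_span: "dualb E d \<Longrightarrow> span E = U"
  unfolding dualb_def by auto

lemma expand2:
  assumes D: "dualb E d" and v: "v \<in> U"
  shows "v = (\<Sum>e\<in>E. g v e *\<^sub>R d e)"
proof -
  note DD = dualbD[OF D]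
  let ?w = "\<Sum>e\<in>E. g v e *\<^sub>R d e"
  have w: "?w \<in> U" using DD(3) by (intro inU_sumsc) blast
  have "v - ?w = 0"
  proof (rule vanish[of _ E])
    show "v - ?w \<in> U" using v w inU by auto
    show "E \<subseteq> U" "U \<subseteq> span E" using DD(2) dualb_span[OF D] by auto
    fix s assume s: "s \<in> E"
    have sU: "s \<in> U" using s DD(2) by blast
    have "g ?w s = (\<Sum>e\<in>E. g (g v e *\<^sub>R d e) s)"
      using DD(1,3) s sU by (intro gsumL) (auto intro: inU)
    also have "\<dots> = (\<Sum>e\<in>E. g v e * (if s = e then 1 else 0))"
    proof (intro sum.cong refl)
      fix e assume e: "e \<in> E"
      have "g (g v e *\<^sub>R d e) s = g v e * g s (d e)"
        using gscL[of "d e" s] gsym[of "d e" s] DD(3)[OF e] sU by simp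
      then show "g (g v e *\<^sub>R d e) s = g v e * (if s = e then 1 else 0)"
        using DD(4)[OF s e] by simp
    qed
    also have "\<dots> = g v s" using DD(1) s by (simp add: if_distrib cong: if_cong)
    finally show "g (v - ?w) s = 0" using gdiffL v w sU by auto
  qed
  then show ?thesis by simp
qed

lemma span_d:
  assumes D: "dualb E d"
  shows "U \<subseteq> span (d ` E)"
proof
  fix v assume v: "v \<in> U"
  have "(\<Sum>e\<in>E. g v e *\<^sub>R d e) \<in> span (d ` E)"
    by (intro span_sum span_scale span_base) auto
  then show "v \<in> span (d ` E)" using expand2[OF D v] by simp
qed

lemma expand1:
  assumes D: "dualb E d" and v: "v \<in> U"
  shows "v = (\<Sum>e\<in>E. g v (d e) *\<^sub>R e)"
proof -
  note DD = dualbD[OF D]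
  let ?w = "\<Sum>e\<in>E. g v (d e) *\<^sub>R e"
  have w: "?w \<in> U" using DD(2) by (intro inU_sumsc) blast
  have "v - ?w = 0"
  proof (rule vanish[of _ "d ` E"])
    show "v - ?w \<in> U" using v w inU by auto
    show "d ` E \<subseteq> U" using DD(3) by auto
    show "U \<subseteq> span (d ` E)" by (rule span_d[OF D])
    fix s assume "s \<in> d ` E"
    then obtain s' where s': "s' \<in> E" "s = d s'" by auto
    have "g ?w (d s') = (\<Sum>e\<in>E. g (g v (d e) *\<^sub>R e) (d s'))"
      using DD(1,2,3) s' by (intro gsumL) (auto intro: inU)
    also have "\<dots> = (\<Sum>e\<in>E. g v (d e) * (if e = s' then 1 else 0))"
      using DD(2,3,4) s' by (intro sum.cong) (auto simp: gscL)
    also have "\<dots> = g v (d s')" using DD(1) s' by (simp add: if_distrib cong: if_cong)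
    finally show "g (v - ?w) s = 0" using gdiffL v w s' DD(3) by auto
  qed
  then show ?thesis by simp
qed

lemma contr:
  assumes D: "dualb E d" and u: "u \<in> U" and v: "v \<in> U"
  shows "(\<Sum>e\<in>E. g u e * g v (d e)) = g u v"
proof -
  note DD = dualbD[OF D]
  have "g u v = g u (\<Sum>e\<in>E. g v (d e) *\<^sub>R e)" using expand1[OF D v] by simp
  also have "\<dots> = (\<Sum>e\<in>E. g u (g v (d e) *\<^sub>R e))"
    using DD(1,2) u by (intro gsumR) (auto intro: inU)
  also have "\<dots> = (\<Sum>e\<in>E. g u e * g v (d e))"
    using DD(2) u by (intro sum.cong) (auto simp: gscR)
  finally show ?thesis by simp
qed

lemma contr2:
  assumes D: "dualb E d" and u: "u \<in> U" and v: "v \<in> U"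
  shows "(\<Sum>e\<in>E. g u (d e) * g v e) = g u v"
  using contr[OF D v u] gsym[OF u v] by (simp add: mult.commute)

lemma dual_of_basis:
  assumes B: "B \<subseteq> U" "independent B" "span B = U"
  shows "\<exists>d. dualb B d"
proof -
  have fin: "finite B" using B(2) by (rule independent_imp_finite)
  define F where "F = (\<lambda>b. \<Sum>b'\<in>B. g b b' *\<^sub>R b')"
  define P where "P = construct B F"
  have linP: "linear P" unfolding P_def using B(2) by (rule linear_construct)
  have Pv: "P v = (\<Sum>b'\<in>B. g v b' *\<^sub>R b')" if v: "v \<in> U" for v
  proof -
    have vs: "v \<in> span B" using v B by simp
    have v_eq: "v = (\<Sum>b\<in>B. representation B v b *\<^sub>R b)"
      using sum_representation_eq[OF B(2) vs fin order_refl] by simp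
    have "P v = (\<Sum>b\<in>B. representation B v b *\<^sub>R P b)"
      by (subst v_eq) (simp add: linear_sum[OF linP] linear_scale[OF linP])
    also have "\<dots> = (\<Sum>b\<in>B. representation B v b *\<^sub>R F b)"
      unfolding P_def using B(2) by (intro sum.cong) (auto simp: construct_basis)
    also have "\<dots> = (\<Sum>b\<in>B. \<Sum>b'\<in>B. (representation B v b * g b b') *\<^sub>R b')"
      unfolding F_def by (simp add: scaleR_sum_right)
    also have "\<dots> = (\<Sum>b'\<in>B. \<Sum>b\<in>B. (representation B v b * g b b') *\<^sub>R b')"
      by (rule sum.swap)
    also have "\<dots> = (\<Sum>b'\<in>B. (\<Sum>b\<in>B. representation B v b * g b b') *\<^sub>R b')"
      by (simp add: scaleR_sum_left)
    also have "\<dots> = (\<Sum>b'\<in>B. g v b' *\<^sub>R b')"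
    proof (intro sum.cong refl)
      fix b' assume b': "b' \<in> B"
      have "g v b' = g (\<Sum>b\<in>B. representation B v b *\<^sub>R b) b'" using v_eq by simp
      also have "\<dots> = (\<Sum>b\<in>B. g (representation B v b *\<^sub>R b) b')"
        using B(1) b' fin by (intro gsumL) (auto intro: inU)
      also have "\<dots> = (\<Sum>b\<in>B. representation B v b * g b b')"
        by (intro sum.cong refl gscL) (use B(1) b' in auto)
      finally show "(\<Sum>b\<in>B. representation B v b * g b b') *\<^sub>R b' = g v b' *\<^sub>R b'" by simp
    qed
    finally show ?thesis .
  qed
  have inj: "inj_on P (span U)"
  proof (rule inj_onI)
    fix x y assume xy: "x \<in> span U" "y \<in> span U" "P x = P y"
    have spU: "span U = U" using sub by (rule span_subspace[OF order_refl span_superset])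
    have xU: "x \<in> U" "y \<in> U" using xy(1,2) unfolding spU by auto
    have "P (x - y) = 0" using xy linear_diff[OF linP] by simp
    then have "(\<Sum>b'\<in>B. g (x - y) b' *\<^sub>R b') = (\<Sum>b'\<in>B. 0 *\<^sub>R b')"
      using Pv[of "x - y"] xU inU by simp
    then have "\<And>b. b \<in> B \<Longrightarrow> g (x - y) b = 0"
      using coeff_unique[OF fin B(2), of "\<lambda>b'. g (x - y) b'" "\<lambda>_. 0"] by simp
    then have "x - y = 0" using B xU inU by (intro vanish[of _ B]) auto
    then show "x = y" by simp
  qed
  have "dim (P ` U) = dim U" using dim_image_eq[OF linP inj] .
  moreover have "P ` U \<subseteq> U"
  proof -
    have "F ` B \<subseteq> U" unfolding F_def using B(1) by (auto intro!: inU_sumsc)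
    then have "span (F ` B) \<subseteq> U" using sub by (rule span_minimal)
    then show ?thesis unfolding P_def using construct_in_span[OF B(2)] by blast
  qed
  moreover have "subspace (P ` U)" using linP sub by (rule linear_subspace_image)
  ultimately have PU: "P ` U = U" using sub by (intro subspace_dim_equal) auto
  have ex: "\<forall>b\<in>B. \<exists>v. v \<in> U \<and> P v = b"
  proof
    fix b assume b: "b \<in> B"
    then have "b \<in> U" using B(1) by blast
    then have "b \<in> P ` U" by (subst PU)
    then obtain v where "b = P v" "v \<in> U" by (rule imageE)
    then show "\<exists>v. v \<in> U \<and> P v = b" by blast
  qed
  obtain d where d0: "\<forall>b\<in>B. d b \<in> U \<and> P (d b) = b" using bchoice[OF ex] by blast
  have d: "\<And>b. b \<in> B \<Longrightarrow> d b \<in> U \<and> P (d b) = b" using d0 by blast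
  have dd: "g (d b) b' = (if b' = b then 1 else 0)" if b: "b \<in> B" and b': "b' \<in> B" for b b'
  proof -
    have "(\<Sum>b'\<in>B. g (d b) b' *\<^sub>R b') = P (d b)" using d[OF b] Pv[of "d b"] by simp
    also have "\<dots> = b" using d[OF b] by simp
    also have "\<dots> = (\<Sum>b'\<in>B. (if b' = b then 1 else 0) *\<^sub>R b')"
    proof -
      have "(\<Sum>b'\<in>B. (if b' = b then 1 else 0) *\<^sub>R b') = (\<Sum>b'\<in>B. if b' = b then b' else 0)"
        by (rule sum.cong) auto
      also have "\<dots> = b" using fin b by simp
      finally show ?thesis by simp
    qed
    finally have eq: "(\<Sum>b'\<in>B. g (d b) b' *\<^sub>R b') = (\<Sum>b'\<in>B. (if b' = b then 1 else 0) *\<^sub>R b')" .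
    from coeff_unique[OF fin B(2) eq b'] show ?thesis by simp
  qed
  have dd': "g b (d b') = (if b = b' then 1 else 0)" if b: "b \<in> B" and b': "b' \<in> B" for b b'
  proof -
    have "g b (d b') = g (d b') b" using gsym[of b "d b'"] d[OF b'] b B(1) by blast
    then show ?thesis using dd[OF b' b] by simp
  qed
  have c4: "\<forall>e\<in>B. d e \<in> U" using d by blast
  have c5: "\<forall>e\<in>B. \<forall>e'\<in>B. g e (d e') = (if e = e' then 1 else 0)" using dd' by blast
  have "dualb B d" unfolding dualb_def
    by (rule conjI[OF fin conjI[OF B(1) conjI[OF B(3) conjI[OF c4 c5]]]])
  then show ?thesis by blast
qed

lemma basis_U: "\<exists>B. B \<subseteq> U \<and> independent B \<and> span B = U"
proof -
  obtain B where "B \<subseteq> U" "independent B" "U \<subseteq> span B" by (rule basis_exists)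
  moreover have "span B \<subseteq> U" using \<open>B \<subseteq> U\<close> sub by (rule span_minimal)
  ultimately show ?thesis by blast
qed

lemma dual_exists: "\<exists>E d. dualb E d"
proof -
  obtain B where "B \<subseteq> U" "independent B" "span B = U" using basis_U by blast
  then obtain d where "dualb B d" using dual_of_basis by blast
  then show ?thesis by blast
qed

lemma riesz:
  fixes \<phi> :: "'v \<Rightarrow> real"
  assumes add: "\<And>x y. x \<in> U \<Longrightarrow> y \<in> U \<Longrightarrow> \<phi> (x + y) = \<phi> x + \<phi> y"
    and sc: "\<And>x a. x \<in> U \<Longrightarrow> \<phi> (a *\<^sub>R x) = a * \<phi> x"
  shows "\<exists>u\<in>U. \<forall>w\<in>U. g u w = \<phi> w"
proof -
  obtain E d where D: "dualb E d" using dual_exists by blast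
  note DD = dualbD[OF D]
  let ?u = "\<Sum>e\<in>E. \<phi> e *\<^sub>R d e"
  have u: "?u \<in> U" using DD(3) by (intro inU_sumsc) blast
  have "g ?u w = \<phi> w" if w: "w \<in> U" for w
  proof -
    have "g ?u w = (\<Sum>e\<in>E. g (\<phi> e *\<^sub>R d e) w)" using DD(1,3) w by (intro gsumL) (auto intro: inU)
    also have "\<dots> = (\<Sum>e\<in>E. g w (d e) * \<phi> e)"
    proof (intro sum.cong refl)
      fix e assume e: "e \<in> E"
      show "g (\<phi> e *\<^sub>R d e) w = g w (d e) * \<phi> e"
        using gscL[of "d e" w] gsym[of "d e" w] DD(3)[OF e] w by simp
    qed
    also have "\<dots> = \<phi> (\<Sum>e\<in>E. g w (d e) *\<^sub>R e)"
    proof -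
      have sc': "\<And>x a. x \<in> U \<Longrightarrow> \<phi> (a *\<^sub>R x) = a *\<^sub>R \<phi> x" using sc by simp
      have EU: "\<And>i. i \<in> E \<Longrightarrow> i \<in> U" using DD(2) by blast
      show ?thesis using linsum[of U \<phi> E "\<lambda>e. e" "\<lambda>e. g w (d e)", OF add sc' sub DD(1) EU] by simp
    qed
    also have "\<dots> = \<phi> w" using expand1[OF D w] by simp
    finally show ?thesis .
  qed
  then show ?thesis using u by blast
qed

lemma unique_rep:
  assumes "u \<in> U" "u' \<in> U" "\<And>w. w \<in> U \<Longrightarrow> g u w = g u' w"
  shows "u = u'"
proof -
  have "u - u' = 0" using assms by (intro nondeg) (auto simp: gdiffL inU)
  then show ?thesis by simp
qed


definition endo :: "('v \<Rightarrow> 'v) \<Rightarrow> bool" where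
  "endo f \<longleftrightarrow> (\<forall>x\<in>U. \<forall>y\<in>U. f (x + y) = f x + f y) \<and> (\<forall>x\<in>U. \<forall>a. f (a *\<^sub>R x) = a *\<^sub>R f x)
     \<and> (\<forall>x\<in>U. f x \<in> U)"

lemma endo_lin:
  assumes "endo f" "finite I" "\<And>i. i \<in> I \<Longrightarrow> v i \<in> U"
  shows "f (\<Sum>i\<in>I. c i *\<^sub>R v i) = (\<Sum>i\<in>I. c i *\<^sub>R f (v i))"
proof -
  have a: "\<And>x y. x \<in> U \<Longrightarrow> y \<in> U \<Longrightarrow> f (x + y) = f x + f y"
    and s: "\<And>x a. x \<in> U \<Longrightarrow> f (a *\<^sub>R x) = a *\<^sub>R f x" using assms(1) unfolding endo_def by blast+
  show ?thesis by (rule linsum[OF a s sub assms(2,3)])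
qed

lemma endo_in: "endo f \<Longrightarrow> x \<in> U \<Longrightarrow> f x \<in> U"
  unfolding endo_def by blast

lemma rep_dual:
  assumes D: "dualb B dB" and ind: "independent B" and v: "v \<in> U" and b: "b \<in> B"
  shows "representation B v b = g v (dB b)"
proof -
  note DD = dualbD[OF D]
  have vs: "v \<in> span B" using v dualb_span[OF D] by simp
  have "(\<Sum>b\<in>B. representation B v b *\<^sub>R b) = v"
    using sum_representation_eq[OF ind vs DD(1) order_refl] .
  also have "v = (\<Sum>b\<in>B. g v (dB b) *\<^sub>R b)" by (rule expand1[OF D v])
  finally have eq: "(\<Sum>b\<in>B. representation B v b *\<^sub>R b) = (\<Sum>b\<in>B. g v (dB b) *\<^sub>R b)" .
  from coeff_unique[OF DD(1) ind eq b] show ?thesis .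
qed

lemma trace_inv:
  assumes DB: "dualb B dB" and DE: "dualb E d" and f: "endo f"
  shows "(\<Sum>b\<in>B. g (f b) (dB b)) = (\<Sum>e\<in>E. g (f e) (d e))"
proof -
  note BB = dualbD[OF DB] and EE = dualbD[OF DE]
  have bU: "b \<in> U" if "b \<in> B" for b using BB(2) that by blast
  have eU: "e \<in> U" if "e \<in> E" for e using EE(2) that by blast
  have "(\<Sum>b\<in>B. g (f b) (dB b)) = (\<Sum>b\<in>B. \<Sum>e\<in>E. g b (d e) * g (f e) (dB b))"
  proof (rule sum.cong[OF refl])
    fix b assume b: "b \<in> B"
    have "f b = f (\<Sum>e\<in>E. g b (d e) *\<^sub>R e)" using expand1[OF DE bU[OF b]] by simp
    also have "\<dots> = (\<Sum>e\<in>E. g b (d e) *\<^sub>R f e)" by (rule endo_lin[OF f EE(1) eU])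
    finally have fb: "f b = (\<Sum>e\<in>E. g b (d e) *\<^sub>R f e)" .
    have "g (f b) (dB b) = (\<Sum>e\<in>E. g (g b (d e) *\<^sub>R f e) (dB b))"
      unfolding fb by (rule gsumL[OF EE(1)]) (use endo_in[OF f] eU BB(3)[OF b] inU in auto)
    also have "\<dots> = (\<Sum>e\<in>E. g b (d e) * g (f e) (dB b))"
      by (rule sum.cong[OF refl], rule gscL) (use endo_in[OF f] eU BB(3)[OF b] in auto)
    finally show "g (f b) (dB b) = (\<Sum>e\<in>E. g b (d e) * g (f e) (dB b))" .
  qed
  also have "\<dots> = (\<Sum>e\<in>E. \<Sum>b\<in>B. g b (d e) * g (f e) (dB b))" by (rule sum.swap)
  also have "\<dots> = (\<Sum>e\<in>E. g (d e) (f e))"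
  proof (rule sum.cong[OF refl])
    fix e assume e: "e \<in> E"
    have "(\<Sum>b\<in>B. g b (d e) * g (f e) (dB b)) = (\<Sum>b\<in>B. g (d e) b * g (f e) (dB b))"
      by (rule sum.cong[OF refl]) (use gsym bU EE(3)[OF e] in auto)
    also have "\<dots> = g (d e) (f e)" by (rule contr[OF DB EE(3)[OF e] endo_in[OF f eU[OF e]]])
    finally show "(\<Sum>b\<in>B. g b (d e) * g (f e) (dB b)) = g (d e) (f e)" .
  qed
  also have "\<dots> = (\<Sum>e\<in>E. g (f e) (d e))"
    by (rule sum.cong[OF refl]) (use gsym EE(3) endo_in[OF f] eU in auto)
  finally show ?thesis .
qed

lemma trace_formula:
  assumes DE: "dualb E d" and f: "endo f"
  shows "ltrace U f = (\<Sum>e\<in>E. g (f e) (d e))"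
proof -
  define B where "B = (SOME B. B \<subseteq> U \<and> independent B \<and> span B = U)"
  have B: "B \<subseteq> U \<and> independent B \<and> span B = U"
    unfolding B_def by (rule someI_ex[OF basis_U])
  obtain dB where DB: "dualb B dB" using dual_of_basis B by blast
  have "ltrace U f = (\<Sum>b\<in>B. representation B (f b) b)"
    unfolding ltrace_def Let_def B_def ..
  also have "\<dots> = (\<Sum>b\<in>B. g (f b) (dB b))"
    by (rule sum.cong[OF refl], rule rep_dual[OF DB]) (use B endo_in[OF f] in auto)
  also have "\<dots> = (\<Sum>e\<in>E. g (f e) (d e))" by (rule trace_inv[OF DB DE f])
  finally show ?thesis .
qed

lemma trace_swap:
  assumes DE: "dualb E d" and f: "endo f"
  shows "(\<Sum>e\<in>E. g (f (d e)) e) = (\<Sum>e\<in>E. g (f e) (d e))"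
proof -
  note EE = dualbD[OF DE]
  have eU: "e \<in> U" if "e \<in> E" for e using EE(2) that by blast
  have "(\<Sum>e\<in>E. g (f (d e)) e) = (\<Sum>e\<in>E. \<Sum>e'\<in>E. g (d e) (d e') * g (f e') e)"
  proof (rule sum.cong[OF refl])
    fix e assume e: "e \<in> E"
    have "f (d e) = f (\<Sum>e'\<in>E. g (d e) (d e') *\<^sub>R e')" using expand1[OF DE EE(3)[OF e]] by simp
    also have "\<dots> = (\<Sum>e'\<in>E. g (d e) (d e') *\<^sub>R f e')" by (rule endo_lin[OF f EE(1) eU])
    finally have fb: "f (d e) = (\<Sum>e'\<in>E. g (d e) (d e') *\<^sub>R f e')" .
    have "g (f (d e)) e = (\<Sum>e'\<in>E. g (g (d e) (d e') *\<^sub>R f e') e)"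
      unfolding fb by (rule gsumL[OF EE(1)]) (use endo_in[OF f] eU e inU in auto)
    also have "\<dots> = (\<Sum>e'\<in>E. g (d e) (d e') * g (f e') e)"
      by (rule sum.cong[OF refl], rule gscL) (use endo_in[OF f] eU e in auto)
    finally show "g (f (d e)) e = (\<Sum>e'\<in>E. g (d e) (d e') * g (f e') e)" .
  qed
  also have "\<dots> = (\<Sum>e'\<in>E. \<Sum>e\<in>E. g (d e) (d e') * g (f e') e)" by (rule sum.swap)
  also have "\<dots> = (\<Sum>e'\<in>E. g (f e') (d e'))"
  proof (rule sum.cong[OF refl])
    fix e' assume e': "e' \<in> E"
    have "(\<Sum>e\<in>E. g (d e) (d e') * g (f e') e) = (\<Sum>e\<in>E. g (f e') e * g (d e') (d e))"
      by (rule sum.cong[OF refl]) (use gsym EE(3) e' in auto)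
    also have "\<dots> = g (f e') (d e')" by (rule contr[OF DE endo_in[OF f eU[OF e']] EE(3)[OF e']])
    finally show "(\<Sum>e\<in>E. g (d e) (d e') * g (f e') e) = g (f e') (d e')" .
  qed
  finally show ?thesis .
qed

end

lemma ad_app: "ad br W x = br W x"
  by (simp add: ad_def)

locale mla = msp U g for U :: "'v::euclidean_space set" and g +
  fixes br :: "'v \<Rightarrow> 'v \<Rightarrow> 'v"
  assumes lie: "lie_algebra U br"
begin

lemma brU: "x \<in> U \<Longrightarrow> y \<in> U \<Longrightarrow> br x y \<in> U"
  using lie unfolding lie_algebra_def by blast
lemma braddL: "x \<in> U \<Longrightarrow> y \<in> U \<Longrightarrow> z \<in> U \<Longrightarrow> br (x + y) z = br x z + br y z"
  using lie unfolding lie_algebra_def by blast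
lemma braddR: "x \<in> U \<Longrightarrow> y \<in> U \<Longrightarrow> z \<in> U \<Longrightarrow> br z (x + y) = br z x + br z y"
  using lie unfolding lie_algebra_def by blast
lemma brscL: "x \<in> U \<Longrightarrow> y \<in> U \<Longrightarrow> br (a *\<^sub>R x) y = a *\<^sub>R br x y"
  using lie unfolding lie_algebra_def by blast
lemma brscR: "x \<in> U \<Longrightarrow> y \<in> U \<Longrightarrow> br y (a *\<^sub>R x) = a *\<^sub>R br y x"
  using lie unfolding lie_algebra_def by blast
lemma bralt: "x \<in> U \<Longrightarrow> br x x = 0"
  using lie unfolding lie_algebra_def by blast
lemma jac: "x \<in> U \<Longrightarrow> y \<in> U \<Longrightarrow> z \<in> U \<Longrightarrow> br x (br y z) + br y (br z x) + br z (br x y) = 0"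
  using lie unfolding lie_algebra_def by blast
lemma brneg: "x \<in> U \<Longrightarrow> y \<in> U \<Longrightarrow> br x y = - br y x"
proof -
  assume x: "x \<in> U" and y: "y \<in> U"
  have "0 = br (x + y) (x + y)" using bralt inU x y by simp
  also have "\<dots> = br x x + br x y + (br y x + br y y)"
    using x y inU by (simp add: braddL braddR)
  finally have "br x y + br y x = 0" using bralt x y by (simp add: algebra_simps)
  then show ?thesis by (simp add: eq_neg_iff_add_eq_0)
qed
lemma br0L: "x \<in> U \<Longrightarrow> br 0 x = 0"
  using brscL[of 0 x 0] inU by simp
lemma br0R: "x \<in> U \<Longrightarrow> br x 0 = 0"
  using brscR[of 0 x 0] inU by simp
lemma brminusL: "x \<in> U \<Longrightarrow> y \<in> U \<Longrightarrow> br (- x) y = - br x y"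
  using brscL[of x y "-1"] by simp
lemma brminusR: "x \<in> U \<Longrightarrow> y \<in> U \<Longrightarrow> br y (- x) = - br y x"
  using brscR[of x y "-1"] by simp
lemma brdiffL: "x \<in> U \<Longrightarrow> y \<in> U \<Longrightarrow> z \<in> U \<Longrightarrow> br (x - y) z = br x z - br y z"
  using braddL[of x "-y" z] brminusL[of y z] inU by simp
lemma brdiffR: "x \<in> U \<Longrightarrow> y \<in> U \<Longrightarrow> z \<in> U \<Longrightarrow> br z (x - y) = br z x - br z y"
  using braddR[of x "-y" z] brminusR[of y z] inU by simp

lemma brsumR: "finite I \<Longrightarrow> (\<And>i. i \<in> I \<Longrightarrow> v i \<in> U) \<Longrightarrow> x \<in> U \<Longrightarrow>
    br x (\<Sum>i\<in>I. c i *\<^sub>R v i) = (\<Sum>i\<in>I. c i *\<^sub>R br x (v i))"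
  by (rule linsum[OF _ _ sub]) (auto simp: braddR brscR)
lemma brsumL: "finite I \<Longrightarrow> (\<And>i. i \<in> I \<Longrightarrow> v i \<in> U) \<Longrightarrow> x \<in> U \<Longrightarrow>
    br (\<Sum>i\<in>I. c i *\<^sub>R v i) x = (\<Sum>i\<in>I. c i *\<^sub>R br (v i) x)"
  by (rule linsum[where f="\<lambda>y. br y x", OF _ _ sub]) (auto simp: braddL brscL)

definition KK :: "'v \<Rightarrow> 'v \<Rightarrow> 'v \<Rightarrow> real" where
  "KK X Y W = g (br X Y) W - g (br Y W) X + g (br W X) Y"

abbreviation nb where "nb \<equiv> levi_civita U br g"

lemma KK_addW: "X \<in> U \<Longrightarrow> Y \<in> U \<Longrightarrow> W1 \<in> U \<Longrightarrow> W2 \<in> U \<Longrightarrow> KK X Y (W1 + W2) = KK X Y W1 + KK X Y W2"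
  by (simp add: KK_def brU inU gaddL gaddR braddL braddR)
lemma KK_scW: "X \<in> U \<Longrightarrow> Y \<in> U \<Longrightarrow> W \<in> U \<Longrightarrow> KK X Y (a *\<^sub>R W) = a * KK X Y W"
  by (simp add: KK_def brU inU gscL gscR brscL brscR algebra_simps)

lemma nb_ex:
  assumes X: "X \<in> U" and Y: "Y \<in> U"
  shows "nb X Y \<in> U \<and> (\<forall>W\<in>U. 2 * g (nb X Y) W = KK X Y W)"
proof -
  have "\<exists>u\<in>U. \<forall>w\<in>U. g u w = KK X Y w / 2"
    by (rule riesz) (auto simp: X Y KK_addW KK_scW add_divide_distrib)
  then obtain u where u: "u \<in> U" "\<And>w. w \<in> U \<Longrightarrow> g u w = KK X Y w / 2" by blast
  have "nb X Y = u"
    unfolding levi_civita_def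
  proof (rule the_equality)
    show "u \<in> U \<and> (\<forall>W\<in>U. 2 * g u W = g (br X Y) W - g (br Y W) X + g (br W X) Y)"
    proof (intro conjI ballI)
      show "u \<in> U" by fact
      fix W assume W: "W \<in> U"
      show "2 * g u W = g (br X Y) W - g (br Y W) X + g (br W X) Y"
        using u(2)[OF W] unfolding KK_def by (simp add: field_simps)
    qed
    fix z assume z: "z \<in> U \<and> (\<forall>W\<in>U. 2 * g z W = g (br X Y) W - g (br Y W) X + g (br W X) Y)"
    show "z = u"
    proof (rule unique_rep)
      show "z \<in> U" "u \<in> U" using z u(1) by auto
      fix w assume w: "w \<in> U"
      have "2 * g z w = KK X Y w" using z w unfolding KK_def by blast
      then show "g z w = g u w" using u(2)[OF w] by simp
    qed
  qed
  then show ?thesis using u by (simp add: mult.commute)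
qed

lemma nb_in: "X \<in> U \<Longrightarrow> Y \<in> U \<Longrightarrow> nb X Y \<in> U"
  using nb_ex by blast
lemma nb_K: "X \<in> U \<Longrightarrow> Y \<in> U \<Longrightarrow> W \<in> U \<Longrightarrow> g (nb X Y) W = KK X Y W / 2"
  using nb_ex by fastforce

lemma nb_char:
  assumes "X \<in> U" "Y \<in> U" "Z \<in> U" "\<And>W. W \<in> U \<Longrightarrow> 2 * g Z W = KK X Y W"
  shows "nb X Y = Z"
proof (rule unique_rep)
  show "nb X Y \<in> U" using assms nb_in by blast
  show "Z \<in> U" by fact
  fix W assume W: "W \<in> U"
  have "2 * g (nb X Y) W = KK X Y W" using nb_K[OF assms(1,2) W] by simp
  then show "g (nb X Y) W = g Z W" using assms(4)[OF W] by simp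
qed

lemma KK_addL: "X1 \<in> U \<Longrightarrow> X2 \<in> U \<Longrightarrow> Y \<in> U \<Longrightarrow> W \<in> U \<Longrightarrow> KK (X1 + X2) Y W = KK X1 Y W + KK X2 Y W"
  by (simp add: KK_def brU inU gaddL gaddR braddL braddR)
lemma KK_scL: "X \<in> U \<Longrightarrow> Y \<in> U \<Longrightarrow> W \<in> U \<Longrightarrow> KK (a *\<^sub>R X) Y W = a * KK X Y W"
  by (simp add: KK_def brU inU gscL gscR brscL brscR algebra_simps)
lemma KK_addR: "X \<in> U \<Longrightarrow> Y1 \<in> U \<Longrightarrow> Y2 \<in> U \<Longrightarrow> W \<in> U \<Longrightarrow> KK X (Y1 + Y2) W = KK X Y1 W + KK X Y2 W"
  by (simp add: KK_def brU inU gaddL gaddR braddL braddR)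
lemma KK_scR: "X \<in> U \<Longrightarrow> Y \<in> U \<Longrightarrow> W \<in> U \<Longrightarrow> KK X (a *\<^sub>R Y) W = a * KK X Y W"
  by (simp add: KK_def brU inU gscL gscR brscL brscR algebra_simps)

lemma nb_addL: "X1 \<in> U \<Longrightarrow> X2 \<in> U \<Longrightarrow> Y \<in> U \<Longrightarrow> nb (X1 + X2) Y = nb X1 Y + nb X2 Y"
  by (rule nb_char) (auto simp: inU nb_in gaddL nb_K KK_addL)
lemma nb_scL: "X \<in> U \<Longrightarrow> Y \<in> U \<Longrightarrow> nb (a *\<^sub>R X) Y = a *\<^sub>R nb X Y"
  by (rule nb_char) (auto simp: inU nb_in gscL nb_K KK_scL)
lemma nb_addR: "X \<in> U \<Longrightarrow> Y1 \<in> U \<Longrightarrow> Y2 \<in> U \<Longrightarrow> nb X (Y1 + Y2) = nb X Y1 + nb X Y2"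
  by (rule nb_char) (auto simp: inU nb_in gaddL nb_K KK_addR)
lemma nb_scR: "X \<in> U \<Longrightarrow> Y \<in> U \<Longrightarrow> nb X (a *\<^sub>R Y) = a *\<^sub>R nb X Y"
  by (rule nb_char) (auto simp: inU nb_in gscL nb_K KK_scR)

abbreviation RR where "RR \<equiv> curvature U br g"

lemma RR_eq: "RR X Y Z = nb X (nb Y Z) - nb Y (nb X Z) - nb (br X Y) Z"
  by (simp add: curvature_def)

lemma RR_in: "X \<in> U \<Longrightarrow> Y \<in> U \<Longrightarrow> Z \<in> U \<Longrightarrow> RR X Y Z \<in> U"
  by (simp add: RR_eq nb_in brU inU)

lemma RR_endo: "Y \<in> U \<Longrightarrow> Z \<in> U \<Longrightarrow> endo (\<lambda>X. RR X Y Z)"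
  unfolding endo_def
  by (auto simp: RR_eq nb_in brU inU nb_addL nb_addR nb_scL nb_scR braddL brscL algebra_simps)

lemma RR_addZ: "X \<in> U \<Longrightarrow> Y \<in> U \<Longrightarrow> Z1 \<in> U \<Longrightarrow> Z2 \<in> U \<Longrightarrow> RR X Y (Z1 + Z2) = RR X Y Z1 + RR X Y Z2"
  by (simp add: RR_eq nb_in brU inU nb_addR algebra_simps)
lemma RR_scZ: "X \<in> U \<Longrightarrow> Y \<in> U \<Longrightarrow> Z \<in> U \<Longrightarrow> RR X Y (a *\<^sub>R Z) = a *\<^sub>R RR X Y Z"
  by (simp add: RR_eq nb_in brU inU nb_scR algebra_simps)

lemma ric_formula:
  assumes D: "dualb E d" and Y: "Y \<in> U" and Z: "Z \<in> U"
  shows "ricci_tensor U br g Y Z = (\<Sum>e\<in>E. g (RR e Y Z) (d e))"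
  unfolding ricci_tensor_def by (rule trace_formula[OF D RR_endo[OF Y Z]])

lemma ricop:
  assumes Y: "Y \<in> U"
  shows "ricci_op U br g Y \<in> U \<and> (\<forall>Z\<in>U. g (ricci_op U br g Y) Z = ricci_tensor U br g Y Z)"
proof -
  obtain E d where D: "dualb E d" using dual_exists by blast
  note DD = dualbD[OF D]
  have eU: "e \<in> U" if "e \<in> E" for e using DD(2) that by blast
  have "\<exists>u\<in>U. \<forall>w\<in>U. g u w = ricci_tensor U br g Y w"
  proof (rule riesz)
    fix x y assume x: "x \<in> U" and y: "y \<in> U"
    show "ricci_tensor U br g Y (x + y) = ricci_tensor U br g Y x + ricci_tensor U br g Y y"
      using x y Y eU DD(3) by (simp add: ric_formula[OF D] inU RR_addZ RR_in gaddL sum.distrib)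
  next
    fix x a assume x: "x \<in> U"
    show "ricci_tensor U br g Y (a *\<^sub>R x) = a * ricci_tensor U br g Y x"
      using x Y eU DD(3) by (simp add: ric_formula[OF D] inU RR_scZ RR_in gscL sum_distrib_left)
  qed
  then obtain u where u: "u \<in> U" "\<And>w. w \<in> U \<Longrightarrow> g u w = ricci_tensor U br g Y w" by blast
  have "ricci_op U br g Y = u"
    unfolding ricci_op_def
  proof (rule the_equality)
    show "u \<in> U \<and> (\<forall>Z\<in>U. g u Z = ricci_tensor U br g Y Z)" using u by simp
    fix z assume z: "z \<in> U \<and> (\<forall>Z\<in>U. g z Z = ricci_tensor U br g Y Z)"
    show "z = u" using z u by (intro unique_rep) auto
  qed
  then show ?thesis using u by simp
qed

lemma ricop_eq:
  assumes "Y \<in> U" "R0 \<in> U" "\<And>Z. Z \<in> U \<Longrightarrow> g R0 Z = ricci_tensor U br g Y Z"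
  shows "ricci_op U br g Y = R0"
  using assms ricop[OF assms(1)] by (intro unique_rep) auto

abbreviation adj where "adj W y \<equiv> metric_adjoint U g (ad br W) y"

lemma adj_ex:
  assumes W: "W \<in> U" and y: "y \<in> U"
  shows "adj W y \<in> U \<and> (\<forall>u\<in>U. g (adj W y) u = g y (br W u))"
proof -
  have "\<exists>u\<in>U. \<forall>w\<in>U. g u w = g y (br W w)"
    by (rule riesz) (auto simp: W y brU inU gaddR gscR braddR brscR)
  then obtain u where u: "u \<in> U" "\<And>w. w \<in> U \<Longrightarrow> g u w = g y (br W w)" by blast
  have "adj W y = u"
    unfolding metric_adjoint_def
  proof (rule the_equality)
    show "u \<in> U \<and> (\<forall>w\<in>U. g u w = g y (ad br W w))" using u by (simp add: ad_app)
    fix z assume z: "z \<in> U \<and> (\<forall>w\<in>U. g z w = g y (ad br W w))"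
    show "z = u" using z u by (intro unique_rep) (auto simp: ad_app)
  qed
  then show ?thesis using u by simp
qed

lemma adj_in: "W \<in> U \<Longrightarrow> y \<in> U \<Longrightarrow> adj W y \<in> U"
  using adj_ex by blast
lemma adj_g: "W \<in> U \<Longrightarrow> y \<in> U \<Longrightarrow> u \<in> U \<Longrightarrow> g (adj W y) u = g y (br W u)"
  using adj_ex by blast
lemma adj_char: "W \<in> U \<Longrightarrow> y \<in> U \<Longrightarrow> z \<in> U \<Longrightarrow> (\<And>u. u \<in> U \<Longrightarrow> g z u = g y (br W u)) \<Longrightarrow> adj W y = z"
  using adj_ex by (intro unique_rep) auto

lemma adj_addW: "W1 \<in> U \<Longrightarrow> W2 \<in> U \<Longrightarrow> y \<in> U \<Longrightarrow> adj (W1 + W2) y = adj W1 y + adj W2 y"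
  by (rule adj_char) (auto simp: inU adj_in gaddL adj_g braddL gaddR brU)
lemma adj_addY: "W \<in> U \<Longrightarrow> y1 \<in> U \<Longrightarrow> y2 \<in> U \<Longrightarrow> adj W (y1 + y2) = adj W y1 + adj W y2"
  by (rule adj_char) (auto simp: inU adj_in gaddL adj_g brU)
lemma adj_scY: "W \<in> U \<Longrightarrow> y \<in> U \<Longrightarrow> adj W (a *\<^sub>R y) = a *\<^sub>R adj W y"
  by (rule adj_char) (auto simp: inU adj_in gscL adj_g brU)
lemma adj_minusY: "W \<in> U \<Longrightarrow> y \<in> U \<Longrightarrow> adj W (- y) = - adj W y"
  using adj_scY[of W y "-1"] by simp

lemma normal_pol:
  assumes W1: "W1 \<in> U" and W2: "W2 \<in> U" and y: "y \<in> U"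
    and n1: "normal_op U g (ad br W1)" and n2: "normal_op U g (ad br W2)"
    and n12: "normal_op U g (ad br (W1 + W2))"
  shows "br W1 (adj W2 y) + br W2 (adj W1 y) = adj W2 (br W1 y) + adj W1 (br W2 y)"
proof -
  have N: "br W (adj W y) = adj W (br W y)" if "normal_op U g (ad br W)" for W
    using that y unfolding normal_op_def by (simp add: ad_app)
  have W12: "W1 + W2 \<in> U" using W1 W2 inU by simp
  have "br (W1 + W2) (adj (W1 + W2) y) = adj (W1 + W2) (br (W1 + W2) y)" by (rule N[OF n12])
  then have "br W1 (adj W1 y) + br W2 (adj W1 y) + (br W1 (adj W2 y) + br W2 (adj W2 y))
      = adj W1 (br W1 y) + adj W2 (br W1 y) + (adj W1 (br W2 y) + adj W2 (br W2 y))"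
    using W1 W2 y by (simp add: adj_addW braddL braddR adj_addY adj_in brU inU)
  then show ?thesis using N[OF n1] N[OF n2] by (simp add: algebra_simps)
qed

end


locale setting =
  fixes G N A B :: "'v::euclidean_space set" and br :: "'v \<Rightarrow> 'v \<Rightarrow> 'v" and g :: "'v \<Rightarrow> 'v \<Rightarrow> real"
  assumes mlaG: "metric_lie_algebra G br g"
    and lieI: "lie_ideal N G br" and abA: "abelian_subalgebra A G br"
    and GNA: "G = {n + a | n a. n \<in> N \<and> a \<in> A}"
    and orthNA: "\<forall>n\<in>N. \<forall>a\<in>A. g n a = 0"
    and subB: "subspace B" and BA: "B \<subseteq> A"
    and Bnd: "\<forall>x\<in>B. (\<forall>y\<in>B. g x y = 0) \<longrightarrow> x = 0"
begin

sublocale mG: mla G g br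
  using mlaG unfolding metric_lie_algebra_def mla_def msp_def mla_axioms_def lie_algebra_def by auto

definition L where "L = {n + b | n b. n \<in> N \<and> b \<in> B}"
definition C where "C = {a \<in> A. \<forall>b\<in>B. g a b = 0}"

lemma subN: "subspace N" and NG: "N \<subseteq> G" and brI: "x \<in> G \<Longrightarrow> y \<in> N \<Longrightarrow> br x y \<in> N"
  using lieI unfolding lie_ideal_def by auto
lemma subA: "subspace A" and AG: "A \<subseteq> G" and brA: "a \<in> A \<Longrightarrow> a' \<in> A \<Longrightarrow> br a a' = 0"
  using abA unfolding abelian_subalgebra_def by auto
lemma BG: "B \<subseteq> G" using BA AG by blast

lemma inG[simp]: "x \<in> N \<Longrightarrow> x \<in> G" "x \<in> A \<Longrightarrow> x \<in> G" "x \<in> B \<Longrightarrow> x \<in> G"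
  using NG AG BG by auto

lemma gNA: "n \<in> N \<Longrightarrow> a \<in> A \<Longrightarrow> g n a = 0" using orthNA by blast
lemma gAN: "n \<in> N \<Longrightarrow> a \<in> A \<Longrightarrow> g a n = 0" using gNA[of n a] mG.gsym[of a n] by simp

lemma decomp: "x \<in> G \<Longrightarrow> \<exists>n a. n \<in> N \<and> a \<in> A \<and> x = n + a"
  using GNA by blast

lemma Nnd: assumes n: "n \<in> N" and h: "\<And>n'. n' \<in> N \<Longrightarrow> g n n' = 0" shows "n = 0"
proof (rule mG.nondeg)
  show "n \<in> G" using n by simp
  fix y assume "y \<in> G"
  then obtain n' a where y: "n' \<in> N" "a \<in> A" "y = n' + a" using decomp by blast
  show "g n y = 0" using y n h[OF y(1)] gNA[OF n y(2)] by (simp add: mG.gaddR)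
qed

lemma And: assumes a: "a \<in> A" and h: "\<And>a'. a' \<in> A \<Longrightarrow> g a a' = 0" shows "a = 0"
proof (rule mG.nondeg)
  show "a \<in> G" using a by simp
  fix y assume "y \<in> G"
  then obtain n' a' where y: "n' \<in> N" "a' \<in> A" "y = n' + a'" using decomp by blast
  show "g a y = 0" using y a h[OF y(2)] gAN[OF y(1) a] by (simp add: mG.gaddR)
qed

lemma perpA_N:
  assumes x: "x \<in> G" and h: "\<And>a. a \<in> A \<Longrightarrow> g x a = 0"
  shows "x \<in> N"
proof -
  obtain n a where na: "n \<in> N" "a \<in> A" "x = n + a" using decomp[OF x] by blast
  have "a = 0"
  proof (rule And[OF na(2)])
    fix a' assume a': "a' \<in> A"
    have "g x a' = g n a' + g a a'" using na a' by (simp add: mG.gaddL)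
    then show "g a a' = 0" using h[OF a'] gNA[OF na(1) a'] by simp
  qed
  then show ?thesis using na by simp
qed

lemma brN: assumes x: "x \<in> G" and y: "y \<in> G" shows "br x y \<in> N"
proof -
  obtain n a where na: "n \<in> N" "a \<in> A" "x = n + a" using decomp[OF x] by blast
  obtain n' a' where na': "n' \<in> N" "a' \<in> A" "y = n' + a'" using decomp[OF y] by blast
  have e1: "br x y = br n y + br a y" using na y by (simp add: mG.braddL)
  have e2: "br n y = - br y n" using na(1) y by (intro mG.brneg) auto
  have e3: "br a y = br a n' + br a a'" using na na' by (simp add: mG.braddR)
  have e4: "br a a' = 0" using brA na na' by simp
  have eq: "br x y = - br y n + br a n'" using e1 e2 e3 e4 by simp
  have "br y n \<in> N" using brI y na by blast
  moreover have "br a n' \<in> N" using brI na na' by simp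
  ultimately show ?thesis unfolding eq using subN by (simp add: subspace_add subspace_neg subspace_diff)
qed

lemma subL: "subspace L"
  unfolding L_def subspace_def
proof (intro conjI allI impI ballI)
  show "0 \<in> {n + b |n b. n \<in> N \<and> b \<in> B}" using subN subB by (auto intro!: exI[of _ 0] simp: subspace_0)
next
  fix x y assume "x \<in> {n + b |n b. n \<in> N \<and> b \<in> B}" "y \<in> {n + b |n b. n \<in> N \<and> b \<in> B}"
  then obtain n b n' b' where "n \<in> N" "b \<in> B" "x = n + b" "n' \<in> N" "b' \<in> B" "y = n' + b'" by blast
  then show "x + y \<in> {n + b |n b. n \<in> N \<and> b \<in> B}" using subN subB
    by (intro CollectI exI[of _ "n + n'"] exI[of _ "b + b'"]) (auto simp: subspace_add algebra_simps)
next
  fix c x assume "x \<in> {n + b |n b. n \<in> N \<and> b \<in> B}"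
  then obtain n b where "n \<in> N" "b \<in> B" "x = n + b" by blast
  then show "c *\<^sub>R x \<in> {n + b |n b. n \<in> N \<and> b \<in> B}" using subN subB
    by (intro CollectI exI[of _ "c *\<^sub>R n"] exI[of _ "c *\<^sub>R b"]) (auto simp: subspace_scale scaleR_add_right)
qed

lemma NL: "N \<subseteq> L"
proof
  fix n assume n: "n \<in> N"
  have "n = n + 0" "0 \<in> B" using subspace_0[OF subB] by auto
  then show "n \<in> L" unfolding L_def using n by blast
qed
lemma BL: "B \<subseteq> L"
proof
  fix b assume b: "b \<in> B"
  have "b = 0 + b" "0 \<in> N" using subspace_0[OF subN] by auto
  then show "b \<in> L" unfolding L_def using b by blast
qed
lemma LG: "L \<subseteq> G"
proof
  fix x assume "x \<in> L"
  then obtain n b where "n \<in> N" "b \<in> B" "x = n + b" unfolding L_def by blast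
  then show "x \<in> G" using mG.inU by simp
qed

lemma subC: "subspace C"
  unfolding C_def subspace_def
proof (intro conjI ballI allI impI)
  show "0 \<in> {a \<in> A. \<forall>b\<in>B. g a b = 0}" using subA by (simp add: subspace_0 mG.g0L)
next
  fix x y assume x: "x \<in> {a \<in> A. \<forall>b\<in>B. g a b = 0}" and y: "y \<in> {a \<in> A. \<forall>b\<in>B. g a b = 0}"
  then show "x + y \<in> {a \<in> A. \<forall>b\<in>B. g a b = 0}" using subA by (simp add: subspace_add mG.gaddL)
next
  fix c x assume x: "x \<in> {a \<in> A. \<forall>b\<in>B. g a b = 0}"
  then show "c *\<^sub>R x \<in> {a \<in> A. \<forall>b\<in>B. g a b = 0}" using subA by (simp add: subspace_scale mG.gscL)
qed

lemma CA: "C \<subseteq> A" unfolding C_def by auto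

lemma inG2[simp]: "x \<in> L \<Longrightarrow> x \<in> G" "x \<in> C \<Longrightarrow> x \<in> G" "x \<in> C \<Longrightarrow> x \<in> A" "x \<in> N \<Longrightarrow> x \<in> L"
  using LG CA NL by auto

lemma gLC: assumes l: "l \<in> L" and c: "c \<in> C" shows "g l c = 0"
proof -
  obtain n b where nb: "n \<in> N" "b \<in> B" "l = n + b" using l unfolding L_def by blast
  have "g l c = g n c + g b c" using nb c by (simp add: mG.gaddL)
  moreover have "g n c = 0" using gNA nb c by simp
  moreover have "g b c = 0" using c nb mG.gsym[of b c] unfolding C_def by simp
  ultimately show ?thesis by simp
qed
lemma gCL: "l \<in> L \<Longrightarrow> c \<in> C \<Longrightarrow> g c l = 0"
  using gLC[of l c] mG.gsym[of c l] by simp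

lemma perpL_C:
  assumes x: "x \<in> G" and h: "\<And>u. u \<in> L \<Longrightarrow> g x u = 0"
  shows "x \<in> C"
proof -
  obtain n a where na: "n \<in> N" "a \<in> A" "x = n + a" using decomp[OF x] by blast
  have "n = 0"
  proof (rule Nnd[OF na(1)])
    fix n' assume n': "n' \<in> N"
    have "g x n' = g n n' + g a n'" using na n' by (simp add: mG.gaddL)
    then show "g n n' = 0" using h[of n'] n' gAN[OF n' na(2)] by simp
  qed
  then have xa: "x = a" using na by simp
  have "\<forall>b\<in>B. g a b = 0" using h BL xa by blast
  then show ?thesis unfolding C_def using xa na by simp
qed

interpretation mB: msp B g
proof
  show "subspace B" by (rule subB)
  show "metric_on B g" unfolding metric_on_def
  proof (intro conjI ballI allI impI)
    fix x y z a assume "x \<in> B" "y \<in> B" "z \<in> B"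
    then show "g x y = g y x" "g (x + y) z = g x z + g y z" "g (a *\<^sub>R x) y = a * g x y"
      using mG.gsym[of x y] by (auto simp: mG.gaddL mG.gscL)
  next
    fix x assume "x \<in> B" "\<forall>y\<in>B. g x y = 0"
    then show "x = 0" using Bnd by blast
  qed
qed

lemma decompLC:
  assumes x: "x \<in> G" shows "\<exists>l c. l \<in> L \<and> c \<in> C \<and> x = l + c"
proof -
  obtain n a where na: "n \<in> N" "a \<in> A" "x = n + a" using decomp[OF x] by blast
  have "\<exists>u\<in>B. \<forall>w\<in>B. g u w = g a w"
    by (rule mB.riesz) (use na in \<open>auto simp: mG.gaddR mG.gscR subsetD[OF BG]\<close>)
  then obtain b where b: "b \<in> B" "\<And>w. w \<in> B \<Longrightarrow> g b w = g a w" by blast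
  have "a - b \<in> C" unfolding C_def
    using na b subA BA by (auto simp: subspace_diff mG.gdiffL subsetD[OF BG])
  moreover have "n + b \<in> L" unfolding L_def using na b by blast
  moreover have "x = (n + b) + (a - b)" using na by simp
  ultimately show ?thesis by blast
qed

sublocale mL: mla L g br
proof
  show "subspace L" by (rule subL)
  show "metric_on L g" unfolding metric_on_def
  proof (intro conjI ballI allI impI)
    fix x y z a assume "x \<in> L" "y \<in> L" "z \<in> L"
    then show "g x y = g y x" "g (x + y) z = g x z + g y z" "g (a *\<^sub>R x) y = a * g x y"
      using mG.gsym[of x y] by (auto simp: mG.gaddL mG.gscL)
  next
    fix x assume x: "x \<in> L" and h: "\<forall>y\<in>L. g x y = 0"
    obtain n b where nb: "n \<in> N" "b \<in> B" "x = n + b" using x unfolding L_def by blast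
    have n0: "n = 0"
    proof (rule Nnd[OF nb(1)])
      fix n' assume n': "n' \<in> N"
      have "g x n' = g n n' + g b n'" using nb n' by (simp add: mG.gaddL)
      moreover have "g b n' = 0" using gAN[OF n'] nb BA by auto
      ultimately show "g n n' = 0" using h n' NL by auto
    qed
    have "b = 0" using Bnd nb h BL n0 by auto
    then show "x = 0" using n0 nb by simp
  qed
  show "lie_algebra L br"
    using mG.lie unfolding lie_algebra_def
    using subL LG brN by (auto simp: subsetD[OF LG] subsetD[OF NL])
qed

sublocale mC: msp C g
proof
  show "subspace C" by (rule subC)
  show "metric_on C g" unfolding metric_on_def
  proof (intro conjI ballI allI impI)
    fix x y z a assume "x \<in> C" "y \<in> C" "z \<in> C"
    then show "g x y = g y x" "g (x + y) z = g x z + g y z" "g (a *\<^sub>R x) y = a * g x y"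
      using mG.gsym[of x y] by (auto simp: mG.gaddL mG.gscL)
  next
    fix x assume x: "x \<in> C" and h: "\<forall>y\<in>C. g x y = 0"
    show "x = 0"
    proof (rule mG.nondeg)
      show "x \<in> G" using x by simp
      fix y assume "y \<in> G"
      then obtain l c where lc: "l \<in> L" "c \<in> C" "y = l + c" using decompLC by blast
      show "g x y = 0" using lc x h gCL by (simp add: mG.gaddR)
    qed
  qed
qed

end


context setting
begin

lemma brNL: "x \<in> G \<Longrightarrow> y \<in> G \<Longrightarrow> br x y \<in> L"
  using brN NL by blast

lemma adjN: assumes W: "W \<in> A" and y: "y \<in> G" shows "mG.adj W y \<in> N"
proof (rule perpA_N)
  show "mG.adj W y \<in> G" using W y by (simp add: mG.adj_in)
  fix a assume a: "a \<in> A"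
  have "g (mG.adj W y) a = g y (br W a)" using W y a by (simp add: mG.adj_g)
  also have "\<dots> = 0" using brA[OF W a] y by (simp add: mG.g0R)
  finally show "g (mG.adj W y) a = 0" .
qed

lemma endoG_ad: "W \<in> G \<Longrightarrow> mG.endo (ad br W)"
  unfolding mG.endo_def by (simp add: ad_app mG.braddR mG.brscR mG.brU)

lemma endoL_ad: assumes W: "W \<in> G" shows "mL.endo (ad br W)"
  unfolding mL.endo_def using W by (simp add: ad_app mG.braddR mG.brscR brNL)

lemma dual_comb:
  assumes D1: "mL.dualb E1 d1" and D2: "mC.dualb E2 d2"
  shows "E1 \<inter> E2 = {}" "mG.dualb (E1 \<union> E2) (\<lambda>e. if e \<in> E1 then d1 e else d2 e)"
proof -
  note A1 = mL.dualbD[OF D1] and A2 = mC.dualbD[OF D2]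
  show disj: "E1 \<inter> E2 = {}"
  proof (rule ccontr)
    assume "E1 \<inter> E2 \<noteq> {}"
    then obtain e where e: "e \<in> E1" "e \<in> E2" by blast
    have "g e (d2 e) = 1" using A2(4)[OF e(2) e(2)] by simp
    moreover have "g e (d2 e) = 0" using gLC[of e "d2 e"] A1(2) A2(3) e by blast
    ultimately show False by simp
  qed
  let ?d = "\<lambda>e. if e \<in> E1 then d1 e else d2 e"
  have fin: "finite (E1 \<union> E2)" using A1(1) A2(1) by simp
  have sub: "E1 \<union> E2 \<subseteq> G" using A1(2) A2(2) LG CA AG by blast
  have dG: "\<forall>e\<in>E1 \<union> E2. ?d e \<in> G" using A1(3) A2(3) LG CA AG by auto
  have orth: "\<forall>e\<in>E1 \<union> E2. \<forall>e'\<in>E1 \<union> E2. g e (?d e') = (if e = e' then 1 else 0)"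
  proof (intro ballI)
    fix e e' assume e: "e \<in> E1 \<union> E2" and e': "e' \<in> E1 \<union> E2"
    show "g e (?d e') = (if e = e' then 1 else 0)"
    proof (cases "e \<in> E1")
      case True
      show ?thesis
      proof (cases "e' \<in> E1")
        case True2: True
        then show ?thesis using A1(4)[OF True True2] by simp
      next
        case False
        then have e'2: "e' \<in> E2" using e' by blast
        have "g e (d2 e') = 0" using gLC[of e "d2 e'"] A1(2) A2(3)[OF e'2] True by blast
        moreover have "e \<noteq> e'" using True False by blast
        ultimately show ?thesis using False by simp
      qed
    next
      case False
      then have e2: "e \<in> E2" using e by blast
      show ?thesis
      proof (cases "e' \<in> E1")
        case True2: True
        have "g e (d1 e') = 0" using gCL[of "d1 e'" e] A1(3)[OF True2] A2(2) e2 by blast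
        moreover have "e \<noteq> e'" using True2 False by blast
        ultimately show ?thesis using True2 by simp
      next
        case False2: False
        then have e'2: "e' \<in> E2" using e' by blast
        show ?thesis using A2(4)[OF e2 e'2] False2 by simp
      qed
    qed
  qed
  have sp: "span (E1 \<union> E2) = G"
  proof
    show "span (E1 \<union> E2) \<subseteq> G" using sub mG.sub by (rule span_minimal)
    show "G \<subseteq> span (E1 \<union> E2)"
    proof
      fix x assume "x \<in> G"
      then obtain l c where lc: "l \<in> L" "c \<in> C" "x = l + c" using decompLC by blast
      have "l \<in> span E1" using lc mL.dualb_span[OF D1] by simp
      then have l: "l \<in> span (E1 \<union> E2)" using span_mono[of E1 "E1 \<union> E2"] by blast
      have "c \<in> span E2" using lc mC.dualb_span[OF D2] by simp
      then have c: "c \<in> span (E1 \<union> E2)" using span_mono[of E2 "E1 \<union> E2"] by blast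
      show "x \<in> span (E1 \<union> E2)" using span_add[OF l c] lc by simp
    qed
  qed
  show "mG.dualb (E1 \<union> E2) ?d" unfolding mG.dualb_def
    by (rule conjI[OF fin conjI[OF sub conjI[OF sp conjI[OF dG orth]]]])
qed

lemma nbLG: "X \<in> L \<Longrightarrow> Y \<in> L \<Longrightarrow> V \<in> L \<Longrightarrow> g (mG.nb X Y) V = g (mL.nb X Y) V"
  by (simp add: mG.nb_K mL.nb_K mG.KK_def mL.KK_def)

lemma cc_C: assumes X: "X \<in> L" and Y: "Y \<in> L" shows "mG.nb X Y - mL.nb X Y \<in> C"
proof (rule perpL_C)
  show "mG.nb X Y - mL.nb X Y \<in> G" using X Y by (simp add: mG.nb_in mL.nb_in mG.inU)
  fix u assume u: "u \<in> L"
  show "g (mG.nb X Y - mL.nb X Y) u = 0"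
    using X Y u by (simp add: mG.gdiffL mG.nb_in mL.nb_in nbLG)
qed

lemma nbXc: assumes X: "X \<in> L" and c: "c \<in> C" and V: "V \<in> L"
  shows "2 * g (mG.nb X c) V = g (br X c) V - g (br c V) X"
proof -
  have "g (br V X) c = 0" using gNA[OF brN[of V X] ] c X V by simp
  then show ?thesis using X c V by (simp add: mG.nb_K mG.KK_def)
qed

lemma G1:
  assumes X: "X \<in> L" and Y: "Y \<in> L" and Z: "Z \<in> L" and V: "V \<in> L"
  defines "c1 \<equiv> mG.nb Y Z - mL.nb Y Z" and "c2 \<equiv> mG.nb X Z - mL.nb X Z"
  shows "g (mG.RR X Y Z) V = g (mL.RR X Y Z) V + (g (br X c1) V - g (br c1 V) X) / 2
           - (g (br Y c2) V - g (br c2 V) Y) / 2"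
proof -
  have c1: "c1 \<in> C" unfolding c1_def using cc_C Y Z by blast
  have c2: "c2 \<in> C" unfolding c2_def using cc_C X Z by blast
  have e1: "mG.nb Y Z = mL.nb Y Z + c1" unfolding c1_def by simp
  have e2: "mG.nb X Z = mL.nb X Z + c2" unfolding c2_def by simp
  have nYZ: "mL.nb Y Z \<in> L" "mL.nb X Z \<in> L" using X Y Z by (auto simp: mL.nb_in)
  have XY: "br X Y \<in> L" using X Y by (simp add: mL.brU)
  have t1: "g (mG.nb X (mG.nb Y Z)) V = g (mL.nb X (mL.nb Y Z)) V + (g (br X c1) V - g (br c1 V) X) / 2"
  proof -
    have "g (mG.nb X (mG.nb Y Z)) V = g (mG.nb X (mL.nb Y Z)) V + g (mG.nb X c1) V"
      unfolding e1 using X nYZ c1 V by (simp add: mG.nb_addR mG.gaddL mG.nb_in)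
    also have "g (mG.nb X (mL.nb Y Z)) V = g (mL.nb X (mL.nb Y Z)) V" using X nYZ V by (simp add: nbLG)
    also have "g (mG.nb X c1) V = (g (br X c1) V - g (br c1 V) X) / 2" using nbXc[OF X c1 V] by simp
    finally show ?thesis .
  qed
  have t2: "g (mG.nb Y (mG.nb X Z)) V = g (mL.nb Y (mL.nb X Z)) V + (g (br Y c2) V - g (br c2 V) Y) / 2"
  proof -
    have "g (mG.nb Y (mG.nb X Z)) V = g (mG.nb Y (mL.nb X Z)) V + g (mG.nb Y c2) V"
      unfolding e2 using Y nYZ c2 V by (simp add: mG.nb_addR mG.gaddL mG.nb_in)
    also have "g (mG.nb Y (mL.nb X Z)) V = g (mL.nb Y (mL.nb X Z)) V" using Y nYZ V by (simp add: nbLG)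
    also have "g (mG.nb Y c2) V = (g (br Y c2) V - g (br c2 V) Y) / 2" using nbXc[OF Y c2 V] by simp
    finally show ?thesis .
  qed
  have t3: "g (mG.nb (br X Y) Z) V = g (mL.nb (br X Y) Z) V" using XY Z V by (simp add: nbLG)
  have "g (mG.RR X Y Z) V = g (mG.nb X (mG.nb Y Z)) V - g (mG.nb Y (mG.nb X Z)) V - g (mG.nb (br X Y) Z) V"
    using X Y Z V by (simp add: mG.RR_eq mG.gdiffL mG.nb_in mG.brU mG.inU)
  moreover have "g (mL.RR X Y Z) V = g (mL.nb X (mL.nb Y Z)) V - g (mL.nb Y (mL.nb X Z)) V - g (mL.nb (br X Y) Z) V"
    using X Y Z V by (simp add: mL.RR_eq mL.gdiffL mL.nb_in mL.brU mL.inU)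
  ultimately show ?thesis using t1 t2 t3 by simp
qed

end


context setting
begin

lemma expandC:
  fixes \<phi> :: "'v \<Rightarrow> real"
  assumes D2: "mC.dualb E2 d2" and c: "c \<in> C"
    and add: "\<And>x y. x \<in> C \<Longrightarrow> y \<in> C \<Longrightarrow> \<phi> (x + y) = \<phi> x + \<phi> y"
    and sc: "\<And>x a. x \<in> C \<Longrightarrow> \<phi> (a *\<^sub>R x) = a * \<phi> x"
  shows "\<phi> c = (\<Sum>w\<in>E2. g c (d2 w) * \<phi> w)"
proof -
  note A2 = mC.dualbD[OF D2]
  have sc': "\<And>x a. x \<in> C \<Longrightarrow> \<phi> (a *\<^sub>R x) = a *\<^sub>R \<phi> x" using sc by simp
  have wC: "\<And>w. w \<in> E2 \<Longrightarrow> w \<in> C" using A2(2) by blast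
  have "\<phi> c = \<phi> (\<Sum>w\<in>E2. g c (d2 w) *\<^sub>R w)" using mC.expand1[OF D2 c] by simp
  also have "\<dots> = (\<Sum>w\<in>E2. g c (d2 w) *\<^sub>R \<phi> w)"
    by (rule linsum[OF add sc' subC A2(1) wC])
  finally show ?thesis by simp
qed

lemma ccW: assumes X: "X \<in> L" and Z: "Z \<in> L" and W: "W \<in> C"
  shows "g (mG.nb X Z - mL.nb X Z) W = (g (br W X) Z - g (br Z W) X) / 2"
proof -
  have a: "g (mL.nb X Z) W = 0" using gLC[of "mL.nb X Z" W] X Z W by (simp add: mL.nb_in)
  have b: "g (br X Z) W = 0" using gNA[OF brN[of X Z]] X Z W by simp
  show ?thesis using X Z W a b by (simp add: mG.gdiffL mG.nb_in mL.nb_in mG.nb_K mG.KK_def)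
qed

lemma contrbr:
  assumes D1: "mL.dualb E1 d1" and W: "W \<in> G" and v: "v \<in> L" and Z: "Z \<in> G"
  shows "(\<Sum>e\<in>E1. g (br W e) Z * g v (d1 e)) = g (br W v) Z"
proof -
  note A1 = mL.dualbD[OF D1]
  have eG: "\<And>e. e \<in> E1 \<Longrightarrow> e \<in> G" using A1(2) LG by blast
  have "br W v = br W (\<Sum>e\<in>E1. g v (d1 e) *\<^sub>R e)" using mL.expand1[OF D1 v] by simp
  also have "\<dots> = (\<Sum>e\<in>E1. g v (d1 e) *\<^sub>R br W e)" by (rule mG.brsumR[OF A1(1) eG W])
  finally have "g (br W v) Z = g (\<Sum>e\<in>E1. g v (d1 e) *\<^sub>R br W e) Z" by simp
  also have "\<dots> = (\<Sum>e\<in>E1. g (g v (d1 e) *\<^sub>R br W e) Z)"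
    by (rule mG.gsumL[OF A1(1) _ Z]) (simp add: eG W mG.brU mG.inU)
  also have "\<dots> = (\<Sum>e\<in>E1. g (br W e) Z * g v (d1 e))"
    by (rule sum.cong[OF refl]) (simp add: eG W Z mG.brU mG.gscL)
  finally show ?thesis by simp
qed

lemma inner:
  assumes D1: "mL.dualb E1 d1" and W: "W \<in> G" and Z: "Z \<in> L" and v: "v \<in> L"
  shows "(\<Sum>e\<in>E1. (g (br W e) Z - g (br Z W) e) / 2 * g v (d1 e)) = (g (br W v) Z - g (br Z W) v) / 2"
proof -
  have "(\<Sum>e\<in>E1. (g (br W e) Z - g (br Z W) e) / 2 * g v (d1 e))
      = ((\<Sum>e\<in>E1. g (br W e) Z * g v (d1 e)) - (\<Sum>e\<in>E1. g (br Z W) e * g v (d1 e))) / 2"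
  proof -
    have "(\<Sum>e\<in>E1. (g (br W e) Z - g (br Z W) e) / 2 * g v (d1 e))
        = (\<Sum>e\<in>E1. (g (br W e) Z * g v (d1 e) - g (br Z W) e * g v (d1 e)) / 2)"
      by (rule sum.cong[OF refl]) (simp add: left_diff_distrib)
    also have "\<dots> = (\<Sum>e\<in>E1. g (br W e) Z * g v (d1 e) - g (br Z W) e * g v (d1 e)) / 2"
      by (rule sum_divide_distrib[symmetric])
    also have "\<dots> = ((\<Sum>e\<in>E1. g (br W e) Z * g v (d1 e)) - (\<Sum>e\<in>E1. g (br Z W) e * g v (d1 e))) / 2"
      by (simp add: sum_subtractf)
    finally show ?thesis .
  qed
  also have "(\<Sum>e\<in>E1. g (br W e) Z * g v (d1 e)) = g (br W v) Z" using contrbr[OF D1 W v] Z by simp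
  also have "(\<Sum>e\<in>E1. g (br Z W) e * g v (d1 e)) = g (br Z W) v"
    by (rule mL.contr[OF D1 _ v]) (simp add: brNL W Z)
  finally show ?thesis .
qed

lemma T3:
  assumes D1: "mL.dualb E1 d1" and D2: "mC.dualb E2 d2" and Y: "Y \<in> L" and Z: "Z \<in> L"
  shows "(\<Sum>e\<in>E1. g (br Y (mG.nb e Z - mL.nb e Z)) (d1 e))
    = (\<Sum>w\<in>E2. (g (br (d2 w) (br Y w)) Z - g (br Z (d2 w)) (br Y w)) / 2)"
proof -
  note A1 = mL.dualbD[OF D1] and A2 = mC.dualbD[OF D2]
  have eL: "\<And>e. e \<in> E1 \<Longrightarrow> e \<in> L" using A1(2) by blast
  have wC: "\<And>w. w \<in> E2 \<Longrightarrow> w \<in> C" using A2(2) by blast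
  have "(\<Sum>e\<in>E1. g (br Y (mG.nb e Z - mL.nb e Z)) (d1 e))
      = (\<Sum>e\<in>E1. \<Sum>w\<in>E2. (g (br (d2 w) e) Z - g (br Z (d2 w)) e) / 2 * g (br Y w) (d1 e))"
  proof (rule sum.cong[OF refl])
    fix e assume e: "e \<in> E1"
    have cc: "mG.nb e Z - mL.nb e Z \<in> C" using cc_C eL[OF e] Z by blast
    have d1e: "d1 e \<in> L" using A1(3)[OF e] .
    have "g (br Y (mG.nb e Z - mL.nb e Z)) (d1 e)
        = (\<Sum>w\<in>E2. g (mG.nb e Z - mL.nb e Z) (d2 w) * g (br Y w) (d1 e))"
      by (rule expandC[OF D2 cc, where \<phi>="\<lambda>c. g (br Y c) (d1 e)"])
         (use Y d1e in \<open>simp_all add: mG.braddR mG.brscR mG.gaddL mG.gscL mG.brU\<close>)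
    also have "\<dots> = (\<Sum>w\<in>E2. (g (br (d2 w) e) Z - g (br Z (d2 w)) e) / 2 * g (br Y w) (d1 e))"
      by (rule sum.cong[OF refl]) (simp add: ccW[OF eL[OF e] Z] A2(3))
    finally show "g (br Y (mG.nb e Z - mL.nb e Z)) (d1 e)
        = (\<Sum>w\<in>E2. (g (br (d2 w) e) Z - g (br Z (d2 w)) e) / 2 * g (br Y w) (d1 e))" .
  qed
  also have "\<dots> = (\<Sum>w\<in>E2. \<Sum>e\<in>E1. (g (br (d2 w) e) Z - g (br Z (d2 w)) e) / 2 * g (br Y w) (d1 e))"
    by (rule sum.swap)
  also have "\<dots> = (\<Sum>w\<in>E2. (g (br (d2 w) (br Y w)) Z - g (br Z (d2 w)) (br Y w)) / 2)"
    by (rule sum.cong[OF refl], rule inner[OF D1]) (use A2(3) Z Y wC in \<open>auto simp: brNL\<close>)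
  finally show ?thesis .
qed

lemma T4:
  assumes D1: "mL.dualb E1 d1" and D2: "mC.dualb E2 d2" and Y: "Y \<in> L" and Z: "Z \<in> L"
  shows "(\<Sum>e\<in>E1. g (br (mG.nb e Z - mL.nb e Z) (d1 e)) Y)
    = (\<Sum>w\<in>E2. (g (br (d2 w) (mG.adj w Y)) Z - g (br Z (d2 w)) (mG.adj w Y)) / 2)"
proof -
  note A1 = mL.dualbD[OF D1] and A2 = mC.dualbD[OF D2]
  have eL: "\<And>e. e \<in> E1 \<Longrightarrow> e \<in> L" using A1(2) by blast
  have wC: "\<And>w. w \<in> E2 \<Longrightarrow> w \<in> C" using A2(2) by blast
  have adjL: "\<And>w. w \<in> E2 \<Longrightarrow> mG.adj w Y \<in> L" using adjN wC Y NL by (meson CA inG2(1) subsetD)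
  have "(\<Sum>e\<in>E1. g (br (mG.nb e Z - mL.nb e Z) (d1 e)) Y)
      = (\<Sum>e\<in>E1. \<Sum>w\<in>E2. (g (br (d2 w) e) Z - g (br Z (d2 w)) e) / 2 * g (mG.adj w Y) (d1 e))"
  proof (rule sum.cong[OF refl])
    fix e assume e: "e \<in> E1"
    have cc: "mG.nb e Z - mL.nb e Z \<in> C" using cc_C eL[OF e] Z by blast
    have d1e: "d1 e \<in> L" using A1(3)[OF e] .
    have "g (br (mG.nb e Z - mL.nb e Z) (d1 e)) Y
        = (\<Sum>w\<in>E2. g (mG.nb e Z - mL.nb e Z) (d2 w) * g (br w (d1 e)) Y)"
      by (rule expandC[OF D2 cc, where \<phi>="\<lambda>c. g (br c (d1 e)) Y"])
         (use Y d1e in \<open>simp_all add: mG.braddL mG.brscL mG.gaddL mG.gscL mG.brU\<close>)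
    also have "\<dots> = (\<Sum>w\<in>E2. (g (br (d2 w) e) Z - g (br Z (d2 w)) e) / 2 * g (mG.adj w Y) (d1 e))"
    proof (rule sum.cong[OF refl])
      fix w assume w: "w \<in> E2"
      have "g (br w (d1 e)) Y = g Y (br w (d1 e))"
        using w wC d1e Y by (intro mG.gsym) (auto simp: mG.brU)
      also have "\<dots> = g (mG.adj w Y) (d1 e)" using w wC d1e Y by (simp add: mG.adj_g)
      finally show "g (mG.nb e Z - mL.nb e Z) (d2 w) * g (br w (d1 e)) Y
          = (g (br (d2 w) e) Z - g (br Z (d2 w)) e) / 2 * g (mG.adj w Y) (d1 e)"
        by (simp add: ccW[OF eL[OF e] Z] A2(3) w)
    qed
    finally show "g (br (mG.nb e Z - mL.nb e Z) (d1 e)) Y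
        = (\<Sum>w\<in>E2. (g (br (d2 w) e) Z - g (br Z (d2 w)) e) / 2 * g (mG.adj w Y) (d1 e))" .
  qed
  also have "\<dots> = (\<Sum>w\<in>E2. \<Sum>e\<in>E1. (g (br (d2 w) e) Z - g (br Z (d2 w)) e) / 2 * g (mG.adj w Y) (d1 e))"
    by (rule sum.swap)
  also have "\<dots> = (\<Sum>w\<in>E2. (g (br (d2 w) (mG.adj w Y)) Z - g (br Z (d2 w)) (mG.adj w Y)) / 2)"
    by (rule sum.cong[OF refl], rule inner[OF D1]) (use A2(3) Z Y wC adjL in \<open>auto\<close>)
  finally show ?thesis .
qed

end


context setting
begin

lemma p1: assumes w: "w \<in> C" and U: "U \<in> G" and W: "W \<in> C"
  shows "g (mG.nb w U) W = 0"
proof -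
  have a: "g (br w U) W = 0" using gNA[OF brN[of w U]] w U W by simp
  have b: "g (br U W) w = 0" using gNA[OF brN[of U W]] w U W by simp
  have c: "br W w = 0" using brA W w by simp
  show ?thesis using a b c w U W by (simp add: mG.nb_K mG.KK_def mG.g0L)
qed

lemma p2: assumes w: "w \<in> C" and Z: "Z \<in> G" and V: "V \<in> N"
  shows "g (mG.nb w Z) V = (g (br w Z) V - g (mG.adj w Z) V) / 2"
proof -
  have b: "g (br Z V) w = 0" using gNA[OF brN[of Z V]] w Z V by simp
  have "g (br V w) Z = g (- br w V) Z" using mG.brneg[of V w] w V by simp
  also have "\<dots> = - g (br w V) Z" using w V Z by (simp add: mG.gminusL mG.brU)
  also have "g (br w V) Z = g Z (br w V)" using w V Z by (intro mG.gsym) (auto simp: mG.brU)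
  also have "\<dots> = g (mG.adj w Z) V" using w V Z by (simp add: mG.adj_g)
  finally have c: "g (br V w) Z = - g (mG.adj w Z) V" .
  show ?thesis using b c w Z V by (simp add: mG.nb_K mG.KK_def)
qed

lemma p3: assumes W: "W \<in> C" and Y: "Y \<in> G" and U: "U \<in> G"
  shows "g (mG.nb Y U) W = (g (mG.adj W Y) U + g (br W Y) U) / 2"
proof -
  have a: "g (br Y U) W = 0" using gNA[OF brN[of Y U]] W Y U by simp
  have "g (br U W) Y = g (- br W U) Y" using mG.brneg[of U W] W U by simp
  also have "\<dots> = - g (br W U) Y" using W U Y by (simp add: mG.gminusL mG.brU)
  also have "g (br W U) Y = g Y (br W U)" using W U Y by (intro mG.gsym) (auto simp: mG.brU)
  also have "\<dots> = g (mG.adj W Y) U" using W U Y by (simp add: mG.adj_g)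
  finally have b: "g (br U W) Y = - g (mG.adj W Y) U" .
  show ?thesis using a b W Y U by (simp add: mG.nb_K mG.KK_def)
qed

lemma p4: assumes w: "w \<in> C" and W: "W \<in> C" and Y: "Y \<in> G" and Z: "Z \<in> G"
  shows "g (mG.nb (br w Y) Z) W = (- g (br Z W) (br w Y) + g (br W (br w Y)) Z) / 2"
proof -
  have a: "g (br (br w Y) Z) W = 0" using gNA[OF brN[of "br w Y" Z]] w W Y Z by (simp add: mG.brU)
  show ?thesis using a w W Y Z by (simp add: mG.nb_K mG.KK_def mG.brU)
qed

lemma P2w: assumes w: "w \<in> C" and W: "W \<in> C" and Y: "Y \<in> L" and Z: "Z \<in> L"
  shows "g (mG.RR w Y Z) W = - (g (br w Z) (mG.adj W Y) - g (mG.adj w Z) (mG.adj W Y)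
      + g (br w Z) (br W Y) - g (mG.adj w Z) (br W Y)) / 4
      + g (br Z W) (br w Y) / 2 - g (br W (br w Y)) Z / 2"
proof -
  have YG: "Y \<in> G" and ZG: "Z \<in> G" and wG: "w \<in> G" and WG: "W \<in> G" using Y Z w W by auto
  have Uw: "mG.nb w Z \<in> G" using wG ZG by (simp add: mG.nb_in)
  have aN: "mG.adj W Y \<in> N" using adjN W YG by simp
  have bN: "br W Y \<in> N" using brN WG YG by simp
  have e0: "g (mG.RR w Y Z) W = g (mG.nb w (mG.nb Y Z)) W - g (mG.nb Y (mG.nb w Z)) W - g (mG.nb (br w Y) Z) W"
    using wG YG ZG WG by (simp add: mG.RR_eq mG.gdiffL mG.nb_in mG.brU mG.inU)
  have e1: "g (mG.nb w (mG.nb Y Z)) W = 0" using p1 w W YG ZG by (simp add: mG.nb_in)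
  have e2: "g (mG.nb Y (mG.nb w Z)) W = (g (mG.adj W Y) (mG.nb w Z) + g (br W Y) (mG.nb w Z)) / 2"
    using p3[OF W YG Uw] .
  have e3: "g (mG.adj W Y) (mG.nb w Z) = (g (br w Z) (mG.adj W Y) - g (mG.adj w Z) (mG.adj W Y)) / 2"
    using mG.gsym[of "mG.adj W Y" "mG.nb w Z"] p2[OF w ZG aN] Uw aN by simp
  have e4: "g (br W Y) (mG.nb w Z) = (g (br w Z) (br W Y) - g (mG.adj w Z) (br W Y)) / 2"
    using mG.gsym[of "br W Y" "mG.nb w Z"] p2[OF w ZG bN] Uw bN by simp
  have e5: "g (mG.nb (br w Y) Z) W = (- g (br Z W) (br w Y) + g (br W (br w Y)) Z) / 2"
    using p4[OF w W YG ZG] .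
  show ?thesis by (rule arithP2[OF e0 e1 e2 e3 e4 e5])
qed

lemma brcomm: assumes w: "w \<in> A" and W: "W \<in> A" and x: "x \<in> G"
  shows "br w (br W x) = br W (br w x)"
proof -
  have wG: "w \<in> G" and WG: "W \<in> G" using w W by auto
  have j: "br w (br W x) + br W (br x w) + br x (br w W) = 0" using mG.jac[OF wG WG x] .
  have "br w W = 0" using brA w W by simp
  then have "br x (br w W) = 0" using x by (simp add: mG.br0R)
  moreover have "br x w = - br w x" using mG.brneg[OF x wG] .
  moreover have "br W (- br w x) = - br W (br w x)" using WG wG x by (simp add: mG.brminusR mG.brU)
  ultimately have "br W (br x w) = - br W (br w x)" by simp
  then have "br w (br W x) - br W (br w x) = 0" using j \<open>br x (br w W) = 0\<close> by simp
  then show ?thesis by simp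
qed

lemma gZW: assumes Z: "Z \<in> G" and W: "W \<in> G" and x: "x \<in> G"
  shows "g (br Z W) x = - g Z (mG.adj W x)"
proof -
  have "g (br Z W) x = g (- br W Z) x" using mG.brneg[OF Z W] by simp
  also have "\<dots> = - g (br W Z) x" using Z W x by (simp add: mG.gminusL mG.brU)
  also have "g (br W Z) x = g x (br W Z)" using Z W x by (intro mG.gsym) (auto simp: mG.brU)
  also have "\<dots> = g (mG.adj W x) Z" using Z W x by (simp add: mG.adj_g)
  also have "\<dots> = g Z (mG.adj W x)" using Z W x by (intro mG.gsym) (auto simp: mG.adj_in)
  finally show ?thesis .
qed

lemma gwZ: assumes w: "w \<in> G" and Z: "Z \<in> G" and V: "V \<in> G"
  shows "g (br w Z) V = g Z (mG.adj w V)"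
proof -
  have "g (br w Z) V = g V (br w Z)" using w Z V by (intro mG.gsym) (auto simp: mG.brU)
  also have "\<dots> = g (mG.adj w V) Z" using w Z V by (simp add: mG.adj_g)
  also have "\<dots> = g Z (mG.adj w V)" using w Z V by (intro mG.gsym) (auto simp: mG.adj_in)
  finally show ?thesis .
qed

lemma Dw:
  assumes w: "w \<in> C" and W: "W \<in> C" and Y: "Y \<in> L" and Z: "Z \<in> L"
    and n1: "normal_op G g (ad br w)" and n2: "normal_op G g (ad br W)"
    and n12: "normal_op G g (ad br (w + W))"
  shows "g (mG.RR w Y Z) W = ((g (br W (br Y w)) Z - g (br Z W) (br Y w)) / 2
      - (g (br W (mG.adj w Y)) Z - g (br Z W) (mG.adj w Y)) / 2) / 2"
proof -
  have YG: "Y \<in> G" and ZG: "Z \<in> G" and wG: "w \<in> G" and WG: "W \<in> G" using Y Z w W by auto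
  have wA: "w \<in> A" and WA: "W \<in> A" using w W by auto
  note bU = mG.brU and aU = mG.adj_in
  have a1: "g (br W (br Y w)) Z = - g Z (br W (br w Y))"
  proof -
    have "br Y w = - br w Y" using mG.brneg[OF YG wG] .
    then have "br W (br Y w) = - br W (br w Y)" using WG wG YG by (simp add: mG.brminusR bU)
    then have "g (br W (br Y w)) Z = - g (br W (br w Y)) Z" using WG wG YG ZG by (simp add: mG.gminusL bU)
    also have "g (br W (br w Y)) Z = g Z (br W (br w Y))" using WG wG YG ZG by (intro mG.gsym) (auto simp: bU)
    finally show ?thesis .
  qed
  have a2: "g (br Z W) (br Y w) = g Z (mG.adj W (br w Y))"
  proof -
    have s1: "g (br Z W) (br Y w) = - g Z (mG.adj W (br Y w))" using gZW ZG WG YG wG by (simp add: bU)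
    have s2: "mG.adj W (br Y w) = - mG.adj W (br w Y)"
      using mG.brneg[OF YG wG] WG wG YG by (simp add: mG.adj_minusY bU)
    show ?thesis using s1 s2 ZG WG wG YG by (simp add: mG.gminusR aU bU)
  qed
  have a3: "g (br W (mG.adj w Y)) Z = g Z (br W (mG.adj w Y))" using WG wG YG ZG by (intro mG.gsym) (auto simp: bU aU)
  have a4: "g (br Z W) (mG.adj w Y) = - g Z (mG.adj W (mG.adj w Y))" using gZW ZG WG YG wG by (simp add: aU)
  have a5: "g (br w Z) V = g Z (mG.adj w V)" if "V \<in> G" for V using gwZ wG ZG that by simp
  have a6: "g (mG.adj w Z) V = g Z (br w V)" if "V \<in> G" for V using wG ZG that by (simp add: mG.adj_g)
  have a7: "g (br Z W) (br w Y) = - g Z (mG.adj W (br w Y))" using gZW ZG WG YG wG by (simp add: bU)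
  have a8: "g (br W (br w Y)) Z = g Z (br W (br w Y))" using WG wG YG ZG by (intro mG.gsym) (auto simp: bU)
  have r1: "g Z (br w (br W Y)) = g Z (br W (br w Y))" using brcomm[OF wA WA YG] by simp
  have r2: "g Z (br w (mG.adj W Y)) + g Z (br W (mG.adj w Y)) = g Z (mG.adj W (br w Y)) + g Z (mG.adj w (br W Y))"
  proof -
    have "br w (mG.adj W Y) + br W (mG.adj w Y) = mG.adj W (br w Y) + mG.adj w (br W Y)"
      using mG.normal_pol[OF wG WG YG n1 n2 n12] .
    then have "g Z (br w (mG.adj W Y) + br W (mG.adj w Y)) = g Z (mG.adj W (br w Y) + mG.adj w (br W Y))" by simp
    then show ?thesis using wG WG YG ZG by (simp add: mG.gaddR bU aU)
  qed
  have r3: "g Z (mG.adj W (mG.adj w Y)) = g Z (mG.adj w (mG.adj W Y))"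
  proof -
    have "g Z (mG.adj W (mG.adj w Y)) = g (mG.adj W (mG.adj w Y)) Z" using WG wG YG ZG by (intro mG.gsym) (auto simp: aU)
    also have "\<dots> = g (mG.adj w Y) (br W Z)" using WG wG YG ZG by (simp add: mG.adj_g aU)
    also have "\<dots> = g Y (br w (br W Z))" using WG wG YG ZG by (simp add: mG.adj_g bU)
    also have "br w (br W Z) = br W (br w Z)" using brcomm[OF wA WA ZG] .
    also have "g Y (br W (br w Z)) = g (mG.adj W Y) (br w Z)" using WG wG YG ZG by (simp add: mG.adj_g bU)
    also have "\<dots> = g (mG.adj w (mG.adj W Y)) Z" using WG wG YG ZG by (simp add: mG.adj_g aU)
    also have "\<dots> = g Z (mG.adj w (mG.adj W Y))" using WG wG YG ZG by (intro mG.gsym) (auto simp: aU)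
    finally show ?thesis .
  qed
  have P: "g (mG.RR w Y Z) W = - (g (br w Z) (mG.adj W Y) - g (mG.adj w Z) (mG.adj W Y)
      + g (br w Z) (br W Y) - g (mG.adj w Z) (br W Y)) / 4
      + g (br Z W) (br w Y) / 2 - g (br W (br w Y)) Z / 2"
    by (rule P2w[OF w W Y Z])
  have b5: "g (br w Z) (mG.adj W Y) = g Z (mG.adj w (mG.adj W Y))" using a5 WG YG by (simp add: aU)
  have b6: "g (mG.adj w Z) (mG.adj W Y) = g Z (br w (mG.adj W Y))" using a6 WG YG by (simp add: aU)
  have b7: "g (br w Z) (br W Y) = g Z (mG.adj w (br W Y))" using a5 WG YG by (simp add: bU)
  have b8: "g (mG.adj w Z) (br W Y) = g Z (br w (br W Y))" using a6 WG YG by (simp add: bU)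
  show ?thesis by (rule arithD[OF P a1 a2 a3 a4 a7 a8 b5 b6 b7 b8 r1 r2 r3])
qed

end


lemma sum_comb2:
  fixes p q :: "'a \<Rightarrow> real"
  shows "(\<Sum>e\<in>E. (p e - q e) / 2) = ((\<Sum>e\<in>E. p e) - (\<Sum>e\<in>E. q e)) / 2"
  by (simp add: sum_divide_distrib[symmetric] sum_subtractf)

lemma sum_comb:
  fixes a b c p q :: "'a \<Rightarrow> real"
  shows "(\<Sum>e\<in>E. a e + (b e - c e) / 2 - (p e - q e) / 2)
    = (\<Sum>e\<in>E. a e) + ((\<Sum>e\<in>E. b e) - (\<Sum>e\<in>E. c e)) / 2 - ((\<Sum>e\<in>E. p e) - (\<Sum>e\<in>E. q e)) / 2"
  by (simp add: sum.distrib sum_subtractf sum_comb2)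

context setting
begin

theorem ric_eq:
  assumes normal: "\<forall>X\<in>A. normal_op G g (ad br X)" and tr0: "\<forall>c\<in>C. ltrace G (ad br c) = 0"
    and Y: "Y \<in> L" and Z: "Z \<in> L"
  shows "ricci_tensor G br g Y Z = ricci_tensor L br g Y Z"
proof -
  obtain E1 d1 where D1: "mL.dualb E1 d1" using mL.dual_exists by blast
  obtain E2 d2 where D2: "mC.dualb E2 d2" using mC.dual_exists by blast
  note A1 = mL.dualbD[OF D1] and A2 = mC.dualbD[OF D2]
  define d where "d = (\<lambda>e. if e \<in> E1 then d1 e else d2 e)"
  have disj: "E1 \<inter> E2 = {}" by (rule dual_comb(1)[OF D1 D2])
  have DG: "mG.dualb (E1 \<union> E2) d" unfolding d_def by (rule dual_comb(2)[OF D1 D2])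
  have YG: "Y \<in> G" and ZG: "Z \<in> G" using Y Z by auto
  have eL: "\<And>e. e \<in> E1 \<Longrightarrow> e \<in> L" using A1(2) by blast
  have wC: "\<And>w. w \<in> E2 \<Longrightarrow> w \<in> C" using A2(2) by blast
  have split: "(\<Sum>e\<in>E1 \<union> E2. F e (d e)) = (\<Sum>e\<in>E1. F e (d1 e)) + (\<Sum>w\<in>E2. F w (d2 w))" for F :: "'v \<Rightarrow> 'v \<Rightarrow> real"
  proof -
    have "(\<Sum>e\<in>E1 \<union> E2. F e (d e)) = (\<Sum>e\<in>E1. F e (d e)) + (\<Sum>w\<in>E2. F w (d w))"
      by (rule sum.union_disjoint[OF A1(1) A2(1) disj])
    moreover have "(\<Sum>e\<in>E1. F e (d e)) = (\<Sum>e\<in>E1. F e (d1 e))"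
      by (rule sum.cong[OF refl]) (simp add: d_def)
    moreover have "(\<Sum>w\<in>E2. F w (d w)) = (\<Sum>w\<in>E2. F w (d2 w))"
      by (rule sum.cong[OF refl]) (use disj in \<open>auto simp: d_def\<close>)
    ultimately show ?thesis by simp
  qed
  have ricG: "ricci_tensor G br g Y Z = (\<Sum>e\<in>E1. g (mG.RR e Y Z) (d1 e)) + (\<Sum>w\<in>E2. g (mG.RR w Y Z) (d2 w))"
    using mG.ric_formula[OF DG YG ZG] split[of "\<lambda>e v. g (mG.RR e Y Z) v"] by simp
  have ricL: "ricci_tensor L br g Y Z = (\<Sum>e\<in>E1. g (mL.RR e Y Z) (d1 e))"
    by (rule mL.ric_formula[OF D1 Y Z])
  define c1 where "c1 = mG.nb Y Z - mL.nb Y Z"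
  have c1C: "c1 \<in> C" unfolding c1_def using cc_C Y Z by blast
  have S1: "(\<Sum>e\<in>E1. g (mG.RR e Y Z) (d1 e)) = (\<Sum>e\<in>E1. g (mL.RR e Y Z) (d1 e))
      + ((\<Sum>e\<in>E1. g (br e c1) (d1 e)) - (\<Sum>e\<in>E1. g (br c1 (d1 e)) e)) / 2
      - ((\<Sum>e\<in>E1. g (br Y (mG.nb e Z - mL.nb e Z)) (d1 e)) - (\<Sum>e\<in>E1. g (br (mG.nb e Z - mL.nb e Z) (d1 e)) Y)) / 2"
  proof -
    have "(\<Sum>e\<in>E1. g (mG.RR e Y Z) (d1 e)) = (\<Sum>e\<in>E1. g (mL.RR e Y Z) (d1 e)
      + (g (br e c1) (d1 e) - g (br c1 (d1 e)) e) / 2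
      - (g (br Y (mG.nb e Z - mL.nb e Z)) (d1 e) - g (br (mG.nb e Z - mL.nb e Z) (d1 e)) Y) / 2)"
      by (rule sum.cong[OF refl]) (unfold c1_def, rule G1[OF eL Y Z A1(3)])
    then show ?thesis by (simp only: sum_comb)
  qed
  have T1: "(\<Sum>e\<in>E1. g (br c1 e) (d1 e)) = 0"
  proof -
    have "ltrace G (ad br c1) = (\<Sum>e\<in>E1 \<union> E2. g (ad br c1 e) (d e))"
      by (rule mG.trace_formula[OF DG endoG_ad]) (use c1C in simp)
    also have "\<dots> = (\<Sum>e\<in>E1. g (ad br c1 e) (d1 e)) + (\<Sum>w\<in>E2. g (ad br c1 w) (d2 w))"
      by (rule split)
    also have "(\<Sum>w\<in>E2. g (ad br c1 w) (d2 w)) = 0"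
    proof (rule sum.neutral, rule ballI)
      fix w assume w: "w \<in> E2"
      have "br c1 w = 0" using brA c1C wC[OF w] by simp
      then show "g (ad br c1 w) (d2 w) = 0" using A2(3)[OF w] by (simp add: ad_app mG.g0L)
    qed
    finally have tr: "ltrace G (ad br c1) = (\<Sum>e\<in>E1. g (ad br c1 e) (d1 e))" by simp
    have "(\<Sum>e\<in>E1. g (ad br c1 e) (d1 e)) = (\<Sum>e\<in>E1. g (br c1 e) (d1 e))"
      by (rule sum.cong[OF refl]) (simp add: ad_app)
    then show ?thesis using tr tr0 c1C by simp
  qed
  have T1': "(\<Sum>e\<in>E1. g (br e c1) (d1 e)) = 0"
  proof -
    have "(\<Sum>e\<in>E1. g (br e c1) (d1 e)) = (\<Sum>e\<in>E1. - g (br c1 e) (d1 e))"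
    proof (rule sum.cong[OF refl])
      fix e assume e: "e \<in> E1"
      have eG: "e \<in> G" and cG: "c1 \<in> G" and dG: "d1 e \<in> G" using eL[OF e] c1C A1(3)[OF e] by auto
      have "br e c1 = - br c1 e" by (rule mG.brneg[OF eG cG])
      then show "g (br e c1) (d1 e) = - g (br c1 e) (d1 e)" using eG cG dG by (simp add: mG.gminusL mG.brU)
    qed
    also have "\<dots> = 0" using T1 by (simp add: sum_negf)
    finally show ?thesis .
  qed
  have T2: "(\<Sum>e\<in>E1. g (br c1 (d1 e)) e) = 0"
  proof -
    have "(\<Sum>e\<in>E1. g (ad br c1 (d1 e)) e) = (\<Sum>e\<in>E1. g (ad br c1 e) (d1 e))"
      by (rule mL.trace_swap[OF D1 endoL_ad]) (use c1C in simp)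
    then show ?thesis using T1 by (simp add: ad_app)
  qed
  have P: "(\<Sum>w\<in>E2. g (mG.RR w Y Z) (d2 w)) =
      ((\<Sum>w\<in>E2. (g (br (d2 w) (br Y w)) Z - g (br Z (d2 w)) (br Y w)) / 2)
     - (\<Sum>w\<in>E2. (g (br (d2 w) (mG.adj w Y)) Z - g (br Z (d2 w)) (mG.adj w Y)) / 2)) / 2"
  proof -
    have "(\<Sum>w\<in>E2. g (mG.RR w Y Z) (d2 w)) = (\<Sum>w\<in>E2.
        ((g (br (d2 w) (br Y w)) Z - g (br Z (d2 w)) (br Y w)) / 2
      - (g (br (d2 w) (mG.adj w Y)) Z - g (br Z (d2 w)) (mG.adj w Y)) / 2) / 2)"
    proof (rule sum.cong[OF refl])
      fix w assume w: "w \<in> E2"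
      have wA: "w \<in> A" and WA: "d2 w \<in> A" and WC: "d2 w \<in> C" using wC[OF w] A2(3)[OF w] by auto
      have sA: "w + d2 w \<in> A" using wA WA subA by (simp add: subspace_add)
      show "g (mG.RR w Y Z) (d2 w) = ((g (br (d2 w) (br Y w)) Z - g (br Z (d2 w)) (br Y w)) / 2
      - (g (br (d2 w) (mG.adj w Y)) Z - g (br Z (d2 w)) (mG.adj w Y)) / 2) / 2"
        by (rule Dw[OF wC[OF w] WC Y Z]) (use normal wA WA sA in auto)
    qed
    then show ?thesis by (simp only: sum_comb2)
  qed
  show ?thesis
    unfolding ricG ricL S1 T1' T2 P T3[OF D1 D2 Y Z] T4[OF D1 D2 Y Z] by simp
qed

end

lemma einstein_sub:
  fixes G N A B :: "'v::euclidean_space set"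
    and br :: "'v \<Rightarrow> 'v \<Rightarrow> 'v"
    and g :: "'v \<Rightarrow> 'v \<Rightarrow> real"
    and H :: 'v
  assumes "solvable_lie G br"
    and ein: "einstein G br g"
    and sd: "standard_decomposition G br g N A"
    and normal: "\<forall>X\<in>A. normal_op G g (ad br X)"
    and HG: "H \<in> G" and Htr: "\<forall>v\<in>G. g H v = ltrace G (ad br v)"
    and subB: "subspace B" and BA: "B \<subseteq> A" and HB: "H \<in> B"
    and Bnd: "\<forall>x\<in>B. (\<forall>y\<in>B. g x y = 0) \<longrightarrow> x = 0"
  shows "subalgebra {n + b | n b. n \<in> N \<and> b \<in> B} G br
       \<and> einstein {n + b | n b. n \<in> N \<and> b \<in> B} br g"
proof -
  obtain c where mlaG: "metric_lie_algebra G br g" and ricG: "\<And>Y. Y \<in> G \<Longrightarrow> ricci_op G br g Y = c *\<^sub>R Y"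
    using ein unfolding einstein_def by blast
  interpret S: setting G N A B br g
    using mlaG sd subB BA Bnd unfolding standard_decomposition_def setting_def by blast
  have Ldef: "{n + b | n b. n \<in> N \<and> b \<in> B} = S.L" unfolding S.L_def ..
  have tr0: "\<forall>c\<in>S.C. ltrace G (ad br c) = 0"
  proof
    fix x assume x: "x \<in> S.C"
    have xG: "x \<in> G" using x by simp
    have "ltrace G (ad br x) = g H x" using Htr xG by simp
    also have "\<dots> = g x H" using S.mG.gsym[OF HG xG] by simp
    also have "\<dots> = 0" using x HB unfolding S.C_def by blast
    finally show "ltrace G (ad br x) = 0" .
  qed
  have sub: "subalgebra S.L G br"
    unfolding subalgebra_def using S.subL S.LG S.brNL by (auto simp: subsetD[OF S.LG])
  have "ricci_op S.L br g Y = c *\<^sub>R Y" if Y: "Y \<in> S.L" for Y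
  proof (rule S.mL.ricop_eq[OF Y])
    show "c *\<^sub>R Y \<in> S.L" using Y by (simp add: S.mL.inU)
    fix Z assume Z: "Z \<in> S.L"
    have YG: "Y \<in> G" and ZG: "Z \<in> G" using Y Z by auto
    have "ricci_tensor S.L br g Y Z = ricci_tensor G br g Y Z"
      using S.ric_eq[OF normal tr0 Y Z] by simp
    also have "\<dots> = g (ricci_op G br g Y) Z" using S.mG.ricop[OF YG] ZG by simp
    also have "\<dots> = g (c *\<^sub>R Y) Z" using ricG[OF YG] by simp
    finally show "g (c *\<^sub>R Y) Z = ricci_tensor S.L br g Y Z" by simp
  qed
  then have "einstein S.L br g"
    unfolding einstein_def metric_lie_algebra_def using S.mL.lie S.mL.met by blast
  then show ?thesis using sub Ldef by simp
qed


theorem proposition1p16: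
  fixes G N A B :: "'v::euclidean_space set"
    and br :: "'v \<Rightarrow> 'v \<Rightarrow> 'v"
    and g :: "'v \<Rightarrow> 'v \<Rightarrow> real"
    and H :: 'v
  assumes "solvable_lie G br"
    and "einstein G br g"
    and "standard_decomposition G br g N A"
    and "\<forall>X\<in>A. normal_op G g (ad br X)"
    and "H \<in> G" and "\<forall>v\<in>G. g H v = ltrace G (ad br v)"
    and "subspace B" and "B \<subseteq> A" and "H \<in> B"
    and "\<forall>x\<in>B. (\<forall>y\<in>B. g x y = 0) \<longrightarrow> x = 0"
  shows "subalgebra {n + b | n b. n \<in> N \<and> b \<in> B} G br
       \<and> einstein {n + b | n b. n \<in> N \<and> b \<in> B} br g"
  using assms by (rule einstein_sub)

end
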